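(* (Upper bound) There is an absolute constant $C$ such that for every $n\geq 1$ and every pair of distinct strings $w,w'\in\{0,1\}^n$, there is a first-order sentence over $\tau_{\mathsf{string}}$ with at most $\log_2(n)+C$ quantifiers that is true in $\mathbf{B}_w$ and false in $\mathbf{B}_{w'}$; moreover this sentence can be taken in prenex form with a quantifier prefix that strictly alternates and ends with $\forall$. (Lower bound) For all sufficiently large $n$, there exist two $n$-bit strings $w,w'$ such that every first-order sentence separating $\{\mathbf{B}_w\}$ from $\{\mathbf{B}_{w'}\}$ has at least $\lfloor \log_2 n\rfloor$ quantifiers.
   Context: Vocabulary $\tau_{\mathsf{string}}=\langle <, S;\ \mathsf{min},\mathsf{max}\rangle$ with $<$ binary, $S$ unary, $\mathsf{min},\mathsf{max}$ constants. A string $w=w_1\cdots w_n\in\{0,1\}^n$ ($n\geq 1$) is encoded by the structure $\mathbf{B}_w$ with universe $\{1,\dots,n\}$, $<$ the usual order, $S=\{i: w_i=1\}$, $\mathsf{min}=1$, $\mathsf{max}=n$. A sentence separates $\mathcal{A}$ from $\mathcal{B}$ if it holds in every structure of $\mathcal{A}$ and fails in every structure of $\mathcal{B}$. The number of quantifiers is the number of quantifier occurrences. *)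

theory Defs
  imports Complex_Main
begin

text \<open>First-order logic over the string vocabulary (<, S; min, max).
Strings w in {0,1}^n are lists of booleans (True = 1), positions 1..n.\<close>

datatype fterm = Var nat | Min | Max

datatype form =
    Less fterm fterm
  | Eq fterm fterm
  | S fterm
  | Neg form
  | Conj form form
  | Disj form form
  | Ex nat form
  | All nat form

fun tvars :: "fterm \<Rightarrow> nat set" where
  "tvars (Var i) = {i}"
| "tvars Min = {}"
| "tvars Max = {}"

fun free_vars :: "form \<Rightarrow> nat set" where
  "free_vars (Less s t) = tvars s \<union> tvars t"
| "free_vars (Eq s t) = tvars s \<union> tvars t"
| "free_vars (S t) = tvars t"
| "free_vars (Neg f) = free_vars f"
| "free_vars (Conj f g) = free_vars f \<union> free_vars g"
| "free_vars (Disj f g) = free_vars f \<union> free_vars g"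
| "free_vars (Ex x f) = free_vars f - {x}"
| "free_vars (All x f) = free_vars f - {x}"

definition sentence :: "form \<Rightarrow> bool" where
  "sentence f \<longleftrightarrow> free_vars f = {}"

fun qcount :: "form \<Rightarrow> nat" where
  "qcount (Less s t) = 0"
| "qcount (Eq s t) = 0"
| "qcount (S t) = 0"
| "qcount (Neg f) = qcount f"
| "qcount (Conj f g) = qcount f + qcount g"
| "qcount (Disj f g) = qcount f + qcount g"
| "qcount (Ex x f) = Suc (qcount f)"
| "qcount (All x f) = Suc (qcount f)"

fun qfree :: "form \<Rightarrow> bool" where
  "qfree (Less s t) = True"
| "qfree (Eq s t) = True"
| "qfree (S t) = True"
| "qfree (Neg f) = qfree f"
| "qfree (Conj f g) = (qfree f \<and> qfree g)"
| "qfree (Disj f g) = (qfree f \<and> qfree g)"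
| "qfree (Ex x f) = False"
| "qfree (All x f) = False"

text \<open>Prenex form whose quantifier prefix strictly alternates and whose
last (innermost) quantifier is a universal one.
ends_all f: f = All x g with g quantifier-free or g = Ex ... (alternating);
ends_ex f: f = Ex x g with g of the form ends_all.\<close>
fun ends_all :: "form \<Rightarrow> bool" and ends_ex :: "form \<Rightarrow> bool" where
  "ends_all (All x g) = (qfree g \<or> ends_ex g)"
| "ends_all (Less s t) = False"
| "ends_all (Eq s t) = False"
| "ends_all (S t) = False"
| "ends_all (Neg f) = False"
| "ends_all (Conj f g) = False"
| "ends_all (Disj f g) = False"
| "ends_all (Ex x f) = False"
| "ends_ex (Ex x g) = ends_all g"
| "ends_ex (Less s t) = False"
| "ends_ex (Eq s t) = False"
| "ends_ex (S t) = False"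
| "ends_ex (Neg f) = False"
| "ends_ex (Conj f g) = False"
| "ends_ex (Disj f g) = False"
| "ends_ex (All x f) = False"

definition alt_prenex_ending_all :: "form \<Rightarrow> bool" where
  "alt_prenex_ending_all f \<longleftrightarrow> ends_all f \<or> ends_ex f"

text \<open>Semantics in B_w: universe {1..length w}, min = 1, max = length w,
S = {i. w_i = 1}, i.e. w ! (i - 1) = True.\<close>
fun teval :: "bool list \<Rightarrow> (nat \<Rightarrow> nat) \<Rightarrow> fterm \<Rightarrow> nat" where
  "teval w \<sigma> (Var i) = \<sigma> i"
| "teval w \<sigma> Min = 1"
| "teval w \<sigma> Max = length w"

fun holds :: "bool list \<Rightarrow> (nat \<Rightarrow> nat) \<Rightarrow> form \<Rightarrow> bool" where
  "holds w \<sigma> (Less s t) = (teval w \<sigma> s < teval w \<sigma> t)"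
| "holds w \<sigma> (Eq s t) = (teval w \<sigma> s = teval w \<sigma> t)"
| "holds w \<sigma> (S t) = (let i = teval w \<sigma> t in 1 \<le> i \<and> i \<le> length w \<and> w ! (i - 1))"
| "holds w \<sigma> (Neg f) = (\<not> holds w \<sigma> f)"
| "holds w \<sigma> (Conj f g) = (holds w \<sigma> f \<and> holds w \<sigma> g)"
| "holds w \<sigma> (Disj f g) = (holds w \<sigma> f \<or> holds w \<sigma> g)"
| "holds w \<sigma> (Ex x f) = (\<exists>a\<in>{1..length w}. holds w (\<sigma>(x := a)) f)"
| "holds w \<sigma> (All x f) = (\<forall>a\<in>{1..length w}. holds w (\<sigma>(x := a)) f)"

text \<open>Truth of a sentence in B_w (the assignment is irrelevant for sentences).\<close>
definition models :: "bool list \<Rightarrow> form \<Rightarrow> bool" where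
  "models w f \<longleftrightarrow> holds w (\<lambda>_. 1) f"

end

theory Submission
  imports Defs
begin

definition close :: "int \<Rightarrow> int \<Rightarrow> int \<Rightarrow> bool" where
  "close t d d' \<longleftrightarrow> d = d' \<or> (t \<le> d \<and> t \<le> d') \<or> (d \<le> -t \<and> d' \<le> -t)"

lemma close_mono: "close t d d' \<Longrightarrow> s \<le> t \<Longrightarrow> close s d d'"
  unfolding close_def by auto

lemma close_neg: "close t (-d) (-d') = close t d d'"
  unfolding close_def by auto

lemma close_sym: "close t d d' = close t d' d"
  unfolding close_def by auto

lemma split_lemma:
  fixes G G' g h t1 t2 :: int
  assumes "G = g + h" "g \<ge> 1" "h \<ge> 1" "t1 \<ge> 1" "t2 \<ge> 1"
    "G = G' \<or> (G \<ge> t1 + t2 \<and> G' \<ge> t1 + t2)"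
  shows "\<exists>g' h'. g' \<ge> 1 \<and> h' \<ge> 1 \<and> g' + h' = G' \<and> close t1 g g' \<and> close t2 h h'"
proof (cases "G = G'")
  case True thus ?thesis using assms by (auto simp: close_def)
next
  case False
  hence big: "G \<ge> t1 + t2" "G' \<ge> t1 + t2" using assms by auto
  show ?thesis
  proof (cases "g < t1")
    case True
    thus ?thesis using assms big by (intro exI[of _ g] exI[of _ "G' - g"]) (auto simp: close_def)
  next
    case False
    show ?thesis
    proof (cases "h < t2")
      case True
      thus ?thesis using assms big False by (intro exI[of _ "G' - h"] exI[of _ h]) (auto simp: close_def)
    next
      case F2: False
      thus ?thesis using assms big False by (intro exI[of _ t1] exI[of _ "G' - t1"]) (auto simp: close_def)
    qed
  qed
qed

lemma add_lemma:
  fixes x x' y y' s :: int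
  assumes "close s x x'" "x \<ge> 1" "x' \<ge> 1" "y = y' \<or> (y \<ge> s \<and> y' \<ge> s)" "y \<ge> 0" "y' \<ge> 0"
  shows "close s (x + y) (x' + y')"
  using assms unfolding close_def by auto

definition GA :: "int \<Rightarrow> int \<Rightarrow> int \<Rightarrow> (int \<times> int) set \<Rightarrow> bool" where
  "GA n p q P \<longleftrightarrow> (1,1) \<in> P \<and> (n,n) \<in> P \<and>
     (\<forall>a a'. (a,a') \<in> P \<longrightarrow> 1 \<le> a \<and> a \<le> n \<and> 1 \<le> a' \<and> a' \<le> n \<and> (a = p \<longleftrightarrow> a' = q))"

definition GC :: "int \<Rightarrow> (int \<times> int) set \<Rightarrow> bool" where
  "GC t P \<longleftrightarrow> (\<forall>a a' b b'. (a,a') \<in> P \<longrightarrow> (b,b') \<in> P \<longrightarrow> close t (b - a) (b' - a'))"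

definition GD :: "int \<Rightarrow> int \<Rightarrow> int \<Rightarrow> (int \<times> int) set \<Rightarrow> bool" where
  "GD t p q P \<longleftrightarrow> (\<forall>a a'. (a,a') \<in> P \<longrightarrow> close (t-1) (a - p) (a' - q)) \<and>
     (\<forall>a a' b b'. (a,a') \<in> P \<longrightarrow> (b,b') \<in> P \<longrightarrow> ((a < p \<and> p < b) \<or> (a' < q \<and> q < b')) \<longrightarrow>
        close (t+1) (b - a) (b' - a'))"

lemma add3:
  fixes x x' y y' t :: int
  assumes "t \<ge> 1" "close t x x'" "x \<ge> 1" "x' \<ge> 1" "(y = y' \<and> y \<ge> 1) \<or> (y \<ge> 2*t \<and> y' \<ge> 2*t)"
  shows "close (t+1) (x + y) (x' + y')"
  using assms unfolding close_def by auto

lemma finish: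
  fixes t n p q a a' :: int
  assumes t2: "t \<ge> 2" and ga: "GA n p q P" and gc: "GC (2*t) P" and gd: "GD (2*t) p q P"
    and a'r: "1 \<le> a'" "a' \<le> n" and ar: "1 \<le> a" "a \<le> n"
    and cl: "\<forall>b b'. (b,b') \<in> P \<longrightarrow> close t (b - a) (b' - a')"
    and cp: "close (t-1) (a - p) (a' - q)"
    and st1: "\<forall>b b'. (b,b') \<in> P \<longrightarrow> b < p \<longrightarrow> p < a \<longrightarrow> close (t+1) (a - b) (a' - b')"
    and st2: "\<forall>b b'. (b,b') \<in> P \<longrightarrow> a < p \<longrightarrow> p < b \<longrightarrow> close (t+1) (b - a) (b' - a')"
  shows "GA n p q (insert (a,a') P) \<and> GC t (insert (a,a') P) \<and> GD t p q (insert (a,a') P)"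
proof -
  have sgnP: "(b < p \<longleftrightarrow> b' < q) \<and> (p < b \<longleftrightarrow> q < b')" if "(b,b') \<in> P" for b b'
  proof -
    have "close (2*t-1) (b - p) (b' - q)" using gd that unfolding GD_def by blast
    thus ?thesis using t2 unfolding close_def by auto
  qed
  have sgna: "(a < p \<longleftrightarrow> a' < q) \<and> (p < a \<longleftrightarrow> q < a')"
    using cp t2 unfolding close_def by auto
  have "a = p \<longleftrightarrow> a' = q" using cp t2 unfolding close_def by auto
  have GA': "GA n p q (insert (a,a') P)"
    using ga a'r ar \<open>a = p \<longleftrightarrow> a' = q\<close> unfolding GA_def by auto
  have GC': "GC t (insert (a,a') P)"
    unfolding GC_def
  proof (intro allI impI)
    fix x x' y y' assume xi: "(x,x') \<in> insert (a,a') P" and yi: "(y,y') \<in> insert (a,a') P"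
    show "close t (y - x) (y' - x')"
    proof (cases "(x,x') = (a,a')")
      case True
      show ?thesis
      proof (cases "(y,y') = (a,a')")
        case True thus ?thesis using \<open>(x,x') = (a,a')\<close> by (auto simp: close_def)
      next
        case False thus ?thesis using True yi cl by auto
      qed
    next
      case False
      hence xP: "(x,x') \<in> P" using xi by auto
      show ?thesis
      proof (cases "(y,y') = (a,a')")
        case True
        have "close t (x - a) (x' - a')" using cl xP by auto
        hence "close t (-(x - a)) (-(x' - a'))" using close_neg by blast
        thus ?thesis using True by simp
      next
        case False
        hence "(y,y') \<in> P" using yi by auto
        hence "close (2*t) (y - x) (y' - x')" using gc xP unfolding GC_def by blast
        thus ?thesis using close_mono t2 by fastforce
      qed
    qed
  qed
  have GD1: "close (t-1) (x - p) (x' - q)" if "(x,x') \<in> insert (a,a') P" for x x'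
  proof (cases "(x,x') = (a,a')")
    case True thus ?thesis using cp by auto
  next
    case False
    hence "(x,x') \<in> P" using that by auto
    hence "close (2*t-1) (x - p) (x' - q)" using gd unfolding GD_def by blast
    thus ?thesis using close_mono t2 by fastforce
  qed
  have GD2: "close (t+1) (y - x) (y' - x')"
    if xi: "(x,x') \<in> insert (a,a') P" and yi: "(y,y') \<in> insert (a,a') P"
      and s: "(x < p \<and> p < y) \<or> (x' < q \<and> q < y')" for x x' y y'
  proof (cases "(x,x') = (a,a')")
    case True
    show ?thesis
    proof (cases "(y,y') = (a,a')")
      case True thus ?thesis using \<open>(x,x') = (a,a')\<close> s by auto
    next
      case False
      hence yP: "(y,y') \<in> P" using yi by auto
      have "a < p \<and> p < y" using s True sgnP[OF yP] sgna by auto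
      thus ?thesis using st2 yP True by auto
    qed
  next
    case False
    hence xP: "(x,x') \<in> P" using xi by auto
    show ?thesis
    proof (cases "(y,y') = (a,a')")
      case True
      have "x < p \<and> p < a" using s True sgnP[OF xP] sgna by auto
      thus ?thesis using st1 xP True by auto
    next
      case False
      hence yP: "(y,y') \<in> P" using yi by auto
      hence "close (2*t+1) (y - x) (y' - x')" using gd xP s unfolding GD_def by blast
      thus ?thesis using close_mono t2 by fastforce
    qed
  qed
  have "GD t p q (insert (a,a') P)" unfolding GD_def using GD1 GD2 by blast
  thus ?thesis using GA' GC' by blast
qed

lemma inv_facts:
  assumes ga: "GA n p q P" and gc: "GC (2*t) P" and gd: "GD (2*t) p q P"
  shows "\<And>b b'. (b,b') \<in> P \<Longrightarrow> 1 \<le> b \<and> b \<le> n \<and> 1 \<le> b' \<and> b' \<le> n"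
    and "\<And>b b' c c'. (b,b') \<in> P \<Longrightarrow> (c,c') \<in> P \<Longrightarrow> close (2*t) (c - b) (c' - b')"
    and "\<And>b b'. (b,b') \<in> P \<Longrightarrow> close (2*t-1) (b - p) (b' - q)"
    and "\<And>b b' c c'. (b,b') \<in> P \<Longrightarrow> (c,c') \<in> P \<Longrightarrow> b < p \<Longrightarrow> p < c \<Longrightarrow> close (2*t+1) (c - b) (c' - b')"
  using assms unfolding GA_def GC_def GD_def by blast+

lemma forth_C1:
  fixes t n p q a lo lo' hi hi' :: int
  assumes t2: "t \<ge> 2" and ga: "GA n p q P" and gc: "GC (2*t) P" and gd: "GD (2*t) p q P"
    and lo: "(lo,lo') \<in> P" and hi: "(hi,hi') \<in> P" and la: "lo < a" and ah: "a < hi"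
    and btw: "\<forall>b b'. (b,b') \<in> P \<longrightarrow> b \<le> lo \<or> hi \<le> b"
    and c1: "p \<le> lo \<or> hi \<le> p"
  shows "\<exists>a'. 1 \<le> a' \<and> a' \<le> n \<and> GA n p q (insert (a,a') P) \<and> GC t (insert (a,a') P) \<and> GD t p q (insert (a,a') P)"
proof -
  note F = inv_facts[OF ga gc gd]
  have r: "1 \<le> lo" "hi \<le> n" "1 \<le> lo'" "hi' \<le> n" using F(1)[OF lo] F(1)[OF hi] by auto
  have "close (2*t) (hi - lo) (hi' - lo')" using F(2)[OF lo hi] .
  hence G: "hi - lo = hi' - lo' \<or> (hi - lo \<ge> t + t \<and> hi' - lo' \<ge> t + t)"
    using la ah t2 unfolding close_def by auto
  obtain g' h' where gh: "g' \<ge> 1" "h' \<ge> 1" "g' + h' = hi' - lo'" "close t (a - lo) g'" "close t (hi - a) h'"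
    using split_lemma[of "hi - lo" "a - lo" "hi - a" t t "hi' - lo'"] G la ah t2 by auto
  define a' where "a' = lo' + g'"
  have a'1: "a' - lo' = g'" "hi' - a' = h'" using gh a'_def by auto
  have cl: "\<forall>b b'. (b,b') \<in> P \<longrightarrow> close t (b - a) (b' - a')"
  proof (intro allI impI)
    fix b b' assume bP: "(b,b') \<in> P"
    show "close t (b - a) (b' - a')"
    proof (cases "b \<le> lo")
      case True
      have c: "close (2*t) (lo - b) (lo' - b')" using F(2)[OF bP lo] .
      hence y: "lo - b = lo' - b' \<or> (lo - b \<ge> t \<and> lo' - b' \<ge> t)" "lo' - b' \<ge> 0"
        using True t2 unfolding close_def by auto
      have "close t ((a - lo) + (lo - b)) (g' + (lo' - b'))"
        by (rule add_lemma[OF gh(4)]) (use y True la gh(1) in auto)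
      hence "close t (a - b) (a' - b')" using a'1 by (simp add: algebra_simps)
      thus ?thesis using close_neg[of t "a - b" "a' - b'"] by simp
    next
      case False
      hence bh: "hi \<le> b" using btw bP by auto
      have c: "close (2*t) (b - hi) (b' - hi')" using F(2)[OF hi bP] .
      hence y: "b - hi = b' - hi' \<or> (b - hi \<ge> t \<and> b' - hi' \<ge> t)" "b' - hi' \<ge> 0"
        using bh t2 unfolding close_def by auto
      have "close t ((hi - a) + (b - hi)) (h' + (b' - hi'))"
        by (rule add_lemma[OF gh(5)]) (use y bh ah gh(2) in auto)
      thus ?thesis using a'1 by (simp add: algebra_simps)
    qed
  qed
  have cp: "close (t-1) (a - p) (a' - q)"
  proof (cases "p \<le> lo")
    case True
    have c: "close (2*t-1) (lo - p) (lo' - q)" using F(3)[OF lo] .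
    hence y: "lo - p = lo' - q \<or> (lo - p \<ge> t - 1 \<and> lo' - q \<ge> t - 1)" "lo' - q \<ge> 0"
      using True t2 unfolding close_def by auto
    have "close (t-1) (a - lo) g'" using close_mono gh(4) by fastforce
    hence "close (t-1) ((a - lo) + (lo - p)) (g' + (lo' - q))"
      by (rule add_lemma) (use y True la gh(1) in auto)
    thus ?thesis using a'1 by (simp add: algebra_simps)
  next
    case False
    hence ph: "hi \<le> p" using c1 by auto
    have c: "close (2*t-1) (hi - p) (hi' - q)" using F(3)[OF hi] .
    hence y: "p - hi = q - hi' \<or> (p - hi \<ge> t - 1 \<and> q - hi' \<ge> t - 1)" "q - hi' \<ge> 0"
      using ph t2 unfolding close_def by auto
    have "close (t-1) (hi - a) h'" using close_mono gh(5) by fastforce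
    hence "close (t-1) ((hi - a) + (p - hi)) (h' + (q - hi'))"
      by (rule add_lemma) (use y ph ah gh(2) in auto)
    hence "close (t-1) (p - a) (q - a')" using a'1 by (simp add: algebra_simps)
    thus ?thesis using close_neg[of "t-1" "a - p" "a' - q"] by simp
  qed
  have st1: "\<forall>b b'. (b,b') \<in> P \<longrightarrow> b < p \<longrightarrow> p < a \<longrightarrow> close (t+1) (a - b) (a' - b')"
  proof (intro allI impI)
    fix b b' assume bP: "(b,b') \<in> P" and bp: "b < p" and pa: "p < a"
    have pl: "p \<le> lo" using c1 pa ah by auto
    have bl: "b < lo" using bp pl by auto
    have y: "(lo - b = lo' - b' \<and> lo - b \<ge> 1) \<or> (lo - b \<ge> 2*t \<and> lo' - b' \<ge> 2*t)"
    proof (cases "p = lo")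
      case True
      have "close (2*t) (lo - b) (lo' - b')" using F(2)[OF bP lo] .
      thus ?thesis using bl t2 unfolding close_def by auto
    next
      case False
      have "close (2*t+1) (lo - b) (lo' - b')" using F(4)[OF bP lo bp] False pl by auto
      thus ?thesis using bl t2 unfolding close_def by auto
    qed
    have "close (t+1) ((a - lo) + (lo - b)) (g' + (lo' - b'))"
      using add3[OF _ gh(4) _ gh(1) y] t2 la by auto
    thus "close (t+1) (a - b) (a' - b')" using a'1 by (simp add: algebra_simps)
  qed
  have st2: "\<forall>b b'. (b,b') \<in> P \<longrightarrow> a < p \<longrightarrow> p < b \<longrightarrow> close (t+1) (b - a) (b' - a')"
  proof (intro allI impI)
    fix b b' assume bP: "(b,b') \<in> P" and ap: "a < p" and pb: "p < b"
    have ph: "hi \<le> p" using c1 ap la by auto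
    have bh: "hi < b" using pb ph by auto
    have y: "(b - hi = b' - hi' \<and> b - hi \<ge> 1) \<or> (b - hi \<ge> 2*t \<and> b' - hi' \<ge> 2*t)"
    proof (cases "p = hi")
      case True
      have "close (2*t) (b - hi) (b' - hi')" using F(2)[OF hi bP] .
      thus ?thesis using bh t2 unfolding close_def by auto
    next
      case False
      have "close (2*t+1) (b - hi) (b' - hi')" using F(4)[OF hi bP _ pb] False ph by auto
      thus ?thesis using bh t2 unfolding close_def by auto
    qed
    have "close (t+1) ((hi - a) + (b - hi)) (h' + (b' - hi'))"
      using add3[OF _ gh(5) _ gh(2) y] t2 ah by auto
    thus "close (t+1) (b - a) (b' - a')" using a'1 by (simp add: algebra_simps)
  qed
  have ap: "a \<noteq> p" using c1 la ah by auto
  have "1 \<le> a'" "a' \<le> n" using a'1 gh r by auto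
  moreover have "1 \<le> a" "a \<le> n" using la ah r by auto
  ultimately show ?thesis
    using finish[OF t2 ga gc gd _ _ _ _ cl cp st1 st2] by blast
qed

lemma forth_C2:
  fixes t n p q a lo lo' hi hi' :: int
  assumes t2: "t \<ge> 2" and ga: "GA n p q P" and gc: "GC (2*t) P" and gd: "GD (2*t) p q P"
    and lo: "(lo,lo') \<in> P" and hi: "(hi,hi') \<in> P" and lp: "lo < p" and pa: "p < a" and ah: "a < hi"
    and btw: "\<forall>b b'. (b,b') \<in> P \<longrightarrow> b \<le> lo \<or> hi \<le> b"
  shows "\<exists>a'. 1 \<le> a' \<and> a' \<le> n \<and> GA n p q (insert (a,a') P) \<and> GC t (insert (a,a') P) \<and> GD t p q (insert (a,a') P)"
proof -
  note F = inv_facts[OF ga gc gd]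
  have r: "1 \<le> lo" "hi \<le> n" "1 \<le> lo'" "hi' \<le> n" using F(1)[OF lo] F(1)[OF hi] by auto
  have "close (2*t-1) (lo - p) (lo' - q)" using F(3)[OF lo] .
  hence E: "q - lo' \<ge> 1" "p - lo = q - lo' \<or> (p - lo \<ge> 2*t-1 \<and> q - lo' \<ge> 2*t-1)"
    using lp t2 unfolding close_def by auto
  have "close (2*t-1) (hi - p) (hi' - q)" using F(3)[OF hi] .
  hence H: "hi' - q \<ge> 1" "hi - p = hi' - q \<or> (hi - p \<ge> 2*t-1 \<and> hi' - q \<ge> 2*t-1)"
    using pa ah t2 unfolding close_def by auto
  have "close (2*t+1) (hi - lo) (hi' - lo')" using F(4)[OF lo hi lp] pa ah by auto
  hence S: "hi - lo = hi' - lo' \<or> (hi - lo \<ge> 2*t+1 \<and> hi' - lo' \<ge> 2*t+1)"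
    using lp pa ah t2 unfolding close_def by auto
  define \<tau> where "\<tau> = (if p - lo = q - lo' \<and> p - lo = 1 then t else t - 1)"
  have \<tau>1: "\<tau> \<ge> 1" "\<tau> \<ge> t - 1" using t2 \<tau>_def by auto
  have HH: "hi - p = hi' - q \<or> (hi - p \<ge> \<tau> + t \<and> hi' - q \<ge> \<tau> + t)"
    using E H S \<tau>_def by auto
  obtain u' h' where uh: "u' \<ge> 1" "h' \<ge> 1" "u' + h' = hi' - q" "close \<tau> (a - p) u'" "close t (hi - a) h'"
    using split_lemma[of "hi - p" "a - p" "hi - a" \<tau> t "hi' - q"] HH pa ah t2 \<tau>1 by auto
  define a' where "a' = q + u'"
  have a'1: "a' - q = u'" "hi' - a' = h'" "a' - lo' = (q - lo') + u'" using uh a'_def by auto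
  have X: "close (t+1) (a - lo) (a' - lo')"
  proof -
    have "a - lo = (p - lo) + (a - p)" by simp
    thus ?thesis using a'1 E uh(1,4) \<tau>_def t2 pa unfolding close_def by (auto split: if_splits)
  qed
  have cl: "\<forall>b b'. (b,b') \<in> P \<longrightarrow> (b < p \<longrightarrow> close (t+1) (a - b) (a' - b')) \<and> close t (b - a) (b' - a')"
  proof (intro allI impI)
    fix b b' assume bP: "(b,b') \<in> P"
    show "(b < p \<longrightarrow> close (t+1) (a - b) (a' - b')) \<and> close t (b - a) (b' - a')"
    proof (cases "b \<le> lo")
      case True
      have c: "close (2*t) (lo - b) (lo' - b')" using F(2)[OF bP lo] .
      hence y: "lo - b = lo' - b' \<or> (lo - b \<ge> t+1 \<and> lo' - b' \<ge> t+1)" "lo' - b' \<ge> 0"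
        using True t2 unfolding close_def by auto
      have "close (t+1) ((a - lo) + (lo - b)) ((a' - lo') + (lo' - b'))"
        by (rule add_lemma[OF X]) (use y True lp pa a'1 E uh in auto)
      hence c1: "close (t+1) (a - b) (a' - b')" by (simp add: algebra_simps)
      hence "close t (a - b) (a' - b')" using close_mono by fastforce
      thus ?thesis using c1 close_neg[of t "a - b" "a' - b'"] by simp
    next
      case False
      hence bh: "hi \<le> b" using btw bP by auto
      have c: "close (2*t) (b - hi) (b' - hi')" using F(2)[OF hi bP] .
      hence y: "b - hi = b' - hi' \<or> (b - hi \<ge> t \<and> b' - hi' \<ge> t)" "b' - hi' \<ge> 0"
        using bh t2 unfolding close_def by auto
      have "close t ((hi - a) + (b - hi)) (h' + (b' - hi'))"
        by (rule add_lemma[OF uh(5)]) (use y bh ah uh(2) in auto)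
      thus ?thesis using a'1 pa bh ah by (simp add: algebra_simps)
    qed
  qed
  have cl2: "\<forall>b b'. (b,b') \<in> P \<longrightarrow> close t (b - a) (b' - a')" using cl by blast
  have cp: "close (t-1) (a - p) (a' - q)" using uh(4) \<tau>1 a'1 close_mono by fastforce
  have st1: "\<forall>b b'. (b,b') \<in> P \<longrightarrow> b < p \<longrightarrow> p < a \<longrightarrow> close (t+1) (a - b) (a' - b')"
    using cl by blast
  have st2: "\<forall>b b'. (b,b') \<in> P \<longrightarrow> a < p \<longrightarrow> p < b \<longrightarrow> close (t+1) (b - a) (b' - a')"
    using pa by auto
  have ap: "a \<noteq> p" using pa by auto
  have "1 \<le> a'" "a' \<le> n" using a'1 uh r E by auto
  moreover have "1 \<le> a" "a \<le> n" using lp pa ah r by auto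
  ultimately show ?thesis
    using finish[OF t2 ga gc gd _ _ _ _ cl2 cp st1 st2] by blast
qed

lemma forth_C3:
  fixes t n p q a lo lo' hi hi' :: int
  assumes t2: "t \<ge> 2" and ga: "GA n p q P" and gc: "GC (2*t) P" and gd: "GD (2*t) p q P"
    and lo: "(lo,lo') \<in> P" and hi: "(hi,hi') \<in> P" and la: "lo < a" and ap: "a < p" and ph: "p < hi"
    and btw: "\<forall>b b'. (b,b') \<in> P \<longrightarrow> b \<le> lo \<or> hi \<le> b"
  shows "\<exists>a'. 1 \<le> a' \<and> a' \<le> n \<and> GA n p q (insert (a,a') P) \<and> GC t (insert (a,a') P) \<and> GD t p q (insert (a,a') P)"
proof -
  note F = inv_facts[OF ga gc gd]
  have r: "1 \<le> lo" "hi \<le> n" "1 \<le> lo'" "hi' \<le> n" using F(1)[OF lo] F(1)[OF hi] by auto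
  have "close (2*t-1) (hi - p) (hi' - q)" using F(3)[OF hi] .
  hence E: "hi' - q \<ge> 1" "hi - p = hi' - q \<or> (hi - p \<ge> 2*t-1 \<and> hi' - q \<ge> 2*t-1)"
    using ph t2 unfolding close_def by auto
  have "close (2*t-1) (lo - p) (lo' - q)" using F(3)[OF lo] .
  hence H: "q - lo' \<ge> 1" "p - lo = q - lo' \<or> (p - lo \<ge> 2*t-1 \<and> q - lo' \<ge> 2*t-1)"
    using ap la t2 unfolding close_def by auto
  have "close (2*t+1) (hi - lo) (hi' - lo')" using F(4)[OF lo hi] la ap ph by auto
  hence S: "hi - lo = hi' - lo' \<or> (hi - lo \<ge> 2*t+1 \<and> hi' - lo' \<ge> 2*t+1)"
    using la ap ph t2 unfolding close_def by auto
  define \<tau> where "\<tau> = (if hi - p = hi' - q \<and> hi - p = 1 then t else t - 1)"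
  have \<tau>1: "\<tau> \<ge> 1" "\<tau> \<ge> t - 1" using t2 \<tau>_def by auto
  have HH: "p - lo = q - lo' \<or> (p - lo \<ge> \<tau> + t \<and> q - lo' \<ge> \<tau> + t)"
    using E H S \<tau>_def by auto
  obtain u' h' where uh: "u' \<ge> 1" "h' \<ge> 1" "u' + h' = q - lo'" "close \<tau> (p - a) u'" "close t (a - lo) h'"
    using split_lemma[of "p - lo" "p - a" "a - lo" \<tau> t "q - lo'"] HH ap la t2 \<tau>1 by auto
  define a' where "a' = q - u'"
  have a'1: "q - a' = u'" "a' - lo' = h'" "hi' - a' = (hi' - q) + u'" using uh a'_def by auto
  have X: "close (t+1) (hi - a) (hi' - a')"
  proof -
    have "hi - a = (hi - p) + (p - a)" by simp
    thus ?thesis using a'1 E uh(1,4) \<tau>_def t2 ap unfolding close_def by (auto split: if_splits)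
  qed
  have cl: "\<forall>b b'. (b,b') \<in> P \<longrightarrow> (a < p \<longrightarrow> p < b \<longrightarrow> close (t+1) (b - a) (b' - a')) \<and> close t (b - a) (b' - a')"
  proof (intro allI impI)
    fix b b' assume bP: "(b,b') \<in> P"
    show "(a < p \<longrightarrow> p < b \<longrightarrow> close (t+1) (b - a) (b' - a')) \<and> close t (b - a) (b' - a')"
    proof (cases "hi \<le> b")
      case True
      have c: "close (2*t) (b - hi) (b' - hi')" using F(2)[OF hi bP] .
      hence y: "b - hi = b' - hi' \<or> (b - hi \<ge> t+1 \<and> b' - hi' \<ge> t+1)" "b' - hi' \<ge> 0"
        using True t2 unfolding close_def by auto
      have "close (t+1) ((hi - a) + (b - hi)) ((hi' - a') + (b' - hi'))"
        by (rule add_lemma[OF X]) (use y True ap ph a'1 E uh in auto)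
      hence c1: "close (t+1) (b - a) (b' - a')" by (simp add: algebra_simps)
      hence "close t (b - a) (b' - a')" using close_mono by fastforce
      thus ?thesis using c1 by simp
    next
      case False
      hence bl: "b \<le> lo" using btw bP by auto
      have c: "close (2*t) (lo - b) (lo' - b')" using F(2)[OF bP lo] .
      hence y: "lo - b = lo' - b' \<or> (lo - b \<ge> t \<and> lo' - b' \<ge> t)" "lo' - b' \<ge> 0"
        using bl t2 unfolding close_def by auto
      have "close t ((a - lo) + (lo - b)) (h' + (lo' - b'))"
        by (rule add_lemma[OF uh(5)]) (use y bl la uh(2) in auto)
      hence "close t (a - b) (a' - b')" using a'1 by (simp add: algebra_simps)
      hence "close t (b - a) (b' - a')" using close_neg[of t "a - b" "a' - b'"] by simp
      thus ?thesis using bl ph ap la by auto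
    qed
  qed
  have cp: "close (t-1) (a - p) (a' - q)"
  proof -
    have "close (t-1) (p - a) (q - a')" using uh(4) \<tau>1 a'1 close_mono by fastforce
    thus ?thesis using close_neg[of "t-1" "a - p" "a' - q"] by simp
  qed
  have st2: "\<forall>b b'. (b,b') \<in> P \<longrightarrow> a < p \<longrightarrow> p < b \<longrightarrow> close (t+1) (b - a) (b' - a')"
    using cl by blast
  have st1: "\<forall>b b'. (b,b') \<in> P \<longrightarrow> b < p \<longrightarrow> p < a \<longrightarrow> close (t+1) (a - b) (a' - b')"
    using ap by auto
  have cl2: "\<forall>b b'. (b,b') \<in> P \<longrightarrow> close t (b - a) (b' - a')" using cl by blast
  have apn: "a \<noteq> p" using ap by auto
  have "1 \<le> a'" "a' \<le> n" using a'1 uh r E H by auto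
  moreover have "1 \<le> a" "a \<le> n" using la ap ph r by auto
  ultimately show ?thesis
    using finish[OF t2 ga gc gd _ _ _ _ cl2 cp st1 st2] by blast
qed

lemma forth_full:
  fixes t n p q a :: int
  assumes t2: "t \<ge> 2" and ga: "GA n p q P" and gc: "GC (2*t) P" and gd: "GD (2*t) p q P"
    and fin: "finite P" and ar: "1 \<le> a" "a \<le> n" and qr: "1 \<le> q" "q \<le> n"
  shows "\<exists>a'. 1 \<le> a' \<and> a' \<le> n \<and> GA n p q (insert (a,a') P) \<and> GC t (insert (a,a') P) \<and> GD t p q (insert (a,a') P)"
proof -
  note F = inv_facts[OF ga gc gd]
  show ?thesis
  proof (cases "\<exists>a''. (a,a'') \<in> P")
    case True
    then obtain a'' where aP: "(a,a'') \<in> P" by blast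
    have ins: "insert (a,a'') P = P" using aP by auto
    have "GC t P" using gc close_mono t2 unfolding GC_def by fastforce
    moreover have "GD t p q P"
    proof -
      have "\<And>x y. close (2*t-1) x y \<Longrightarrow> close (t-1) x y" "\<And>x y. close (2*t+1) x y \<Longrightarrow> close (t+1) x y"
        using close_mono t2 by fastforce+
      thus ?thesis using gd unfolding GD_def by blast
    qed
    ultimately show ?thesis using ins ga F(1)[OF aP] by auto
  next
    case nP: False
    show ?thesis
    proof (cases "a = p")
      case True
      have cl: "\<forall>b b'. (b,b') \<in> P \<longrightarrow> close t (b - a) (b' - q)"
      proof (intro allI impI)
        fix b b' assume "(b,b') \<in> P"
        hence "close (2*t-1) (b - p) (b' - q)" using F(3) by blast
        thus "close t (b - a) (b' - q)" using close_mono t2 True by fastforce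
      qed
      have cp: "close (t-1) (a - p) (q - q)" using True by (simp add: close_def)
      show ?thesis using finish[OF t2 ga gc gd qr ar cl cp] True qr by blast
    next
      case ap: False
      define S where "S = fst ` P"
      have finS: "finite S" using fin S_def by auto
      have oneS: "1 \<in> S" and nS: "n \<in> S" using ga unfolding GA_def S_def by force+
      have aS: "a \<notin> S" using nP S_def by force
      have a1: "1 < a" using ar aS oneS by (cases "a = 1") auto
      have an: "a < n" using ar aS nS by (cases "a = n") auto
      define lo where "lo = Lattices_Big.Max {b \<in> S. b < a}"
      define hi where "hi = Lattices_Big.Min {b \<in> S. a < b}"
      have "lo \<in> {b \<in> S. b < a}" unfolding lo_def by (rule Max_in) (use finS oneS a1 in auto)
      hence lo1: "lo \<in> S" "lo < a" by auto
      have "hi \<in> {b \<in> S. a < b}" unfolding hi_def by (rule Min_in) (use finS nS an in auto)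
      hence hi1: "hi \<in> S" "a < hi" by auto
      obtain lo' where lo: "(lo,lo') \<in> P" using lo1 S_def by auto
      obtain hi' where hi: "(hi,hi') \<in> P" using hi1 S_def by auto
      have btw: "\<forall>b b'. (b,b') \<in> P \<longrightarrow> b \<le> lo \<or> hi \<le> b"
      proof (intro allI impI)
        fix b b' assume bP: "(b,b') \<in> P"
        hence bS: "b \<in> S" using S_def by force
        hence "b \<noteq> a" using aS by auto
        thus "b \<le> lo \<or> hi \<le> b"
        proof (cases "b < a")
          case True thus ?thesis using bS finS unfolding lo_def by auto
        next
          case False thus ?thesis using bS finS \<open>b \<noteq> a\<close> unfolding hi_def by auto
        qed
      qed
      show ?thesis
      proof (cases "p \<le> lo \<or> hi \<le> p")
        case True
        show ?thesis by (rule forth_C1[OF t2 ga gc gd lo hi lo1(2) hi1(2) btw True])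
      next
        case False
        show ?thesis
        proof (cases "p < a")
          case True
          show ?thesis by (rule forth_C2[OF t2 ga gc gd lo hi _ True hi1(2) btw]) (use False in auto)
        next
          case False2: False
          show ?thesis by (rule forth_C3[OF t2 ga gc gd lo hi lo1(2) _ _ btw]) (use False False2 ap in auto)
        qed
      qed
    qed
  qed
qed

lemma lohi:
  fixes a n :: int
  assumes ga: "GA n p q P" and fin: "finite P" and ar: "1 \<le> a" "a \<le> n" and nP: "\<not>(\<exists>a''. (a,a'') \<in> P)"
  shows "\<exists>lo lo' hi hi'. (lo,lo') \<in> P \<and> (hi,hi') \<in> P \<and> lo < a \<and> a < hi \<and>
           (\<forall>b b'. (b,b') \<in> P \<longrightarrow> b \<le> lo \<or> hi \<le> b)"
proof -
  define S where "S = fst ` P"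
  have finS: "finite S" using fin S_def by auto
  have oneS: "1 \<in> S" and nS: "n \<in> S" using ga unfolding GA_def S_def by force+
  have aS: "a \<notin> S" using nP S_def by force
  have a1: "1 < a" using ar aS oneS by (cases "a = 1") auto
  have an: "a < n" using ar aS nS by (cases "a = n") auto
  define lo where "lo = Lattices_Big.Max {b \<in> S. b < a}"
  define hi where "hi = Lattices_Big.Min {b \<in> S. a < b}"
  have "lo \<in> {b \<in> S. b < a}" unfolding lo_def by (rule Max_in) (use finS oneS a1 in auto)
  hence lo1: "lo \<in> S" "lo < a" by auto
  have "hi \<in> {b \<in> S. a < b}" unfolding hi_def by (rule Min_in) (use finS nS an in auto)
  hence hi1: "hi \<in> S" "a < hi" by auto
  obtain lo' where lo: "(lo,lo') \<in> P" using lo1 S_def by auto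
  obtain hi' where hi: "(hi,hi') \<in> P" using hi1 S_def by auto
  have btw: "\<forall>b b'. (b,b') \<in> P \<longrightarrow> b \<le> lo \<or> hi \<le> b"
  proof (intro allI impI)
    fix b b' assume bP: "(b,b') \<in> P"
    hence bS: "b \<in> S" using S_def by force
    hence "b \<noteq> a" using aS by auto
    thus "b \<le> lo \<or> hi \<le> b"
    proof (cases "b < a")
      case True thus ?thesis using bS finS unfolding lo_def by auto
    next
      case False thus ?thesis using bS finS \<open>b \<noteq> a\<close> unfolding hi_def by auto
    qed
  qed
  show ?thesis using lo hi lo1 hi1 btw by blast
qed

lemma forth_zero:
  fixes n p q a :: int
  assumes ga: "GA n p q P" and gc: "GC 2 P" and gd: "GD 2 p q P"
    and fin: "finite P" and ar: "1 \<le> a" "a \<le> n" and qr: "1 \<le> q" "q \<le> n"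
  shows "\<exists>a'. 1 \<le> a' \<and> a' \<le> n \<and> GA n p q (insert (a,a') P) \<and> GC 1 (insert (a,a') P)"
proof -
  have gc': "GC (2*1) P" and gd': "GD (2*1) p q P" using gc gd by auto
  note F = inv_facts[OF ga gc' gd']
  have fin0: "GA n p q (insert (a,a') P) \<and> GC 1 (insert (a,a') P)"
    if a'r: "1 \<le> a'" "a' \<le> n" and eq: "a = p \<longleftrightarrow> a' = q"
      and cl: "\<forall>b b'. (b,b') \<in> P \<longrightarrow> close 1 (b - a) (b' - a')" for a'
  proof -
    have "GA n p q (insert (a,a') P)" using ga a'r ar eq unfolding GA_def by auto
    moreover have "GC 1 (insert (a,a') P)"
      unfolding GC_def
    proof (intro allI impI)
      fix x x' y y' assume xi: "(x,x') \<in> insert (a,a') P" and yi: "(y,y') \<in> insert (a,a') P"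
      show "close 1 (y - x) (y' - x')"
      proof (cases "(x,x') = (a,a')")
        case True
        show ?thesis
        proof (cases "(y,y') = (a,a')")
          case True thus ?thesis using \<open>(x,x') = (a,a')\<close> by (auto simp: close_def)
        next
          case False thus ?thesis using True yi cl by auto
        qed
      next
        case False
        hence xP: "(x,x') \<in> P" using xi by auto
        show ?thesis
        proof (cases "(y,y') = (a,a')")
          case True
          have "close 1 (x - a) (x' - a')" using cl xP by auto
          hence "close 1 (-(x - a)) (-(x' - a'))" using close_neg by blast
          thus ?thesis using True by simp
        next
          case False
          hence "(y,y') \<in> P" using yi by auto
          hence "close (2*1) (y - x) (y' - x')" using F(2) xP by blast
          thus ?thesis using close_mono by fastforce
        qed
      qed
    qed
    ultimately show ?thesis by blast
  qed
  show ?thesis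
  proof (cases "\<exists>a''. (a,a'') \<in> P")
    case True
    then obtain a'' where aP: "(a,a'') \<in> P" by blast
    have "\<forall>b b'. (b,b') \<in> P \<longrightarrow> close 1 (b - a) (b' - a'')"
      using F(2)[OF aP] close_mono by fastforce
    moreover have "a = p \<longleftrightarrow> a'' = q" using ga aP unfolding GA_def by blast
    ultimately show ?thesis using fin0 F(1)[OF aP] by blast
  next
    case nP: False
    show ?thesis
    proof (cases "a = p")
      case True
      have "\<forall>b b'. (b,b') \<in> P \<longrightarrow> close 1 (b - a) (b' - q)"
        using F(3) True by (fastforce simp: close_def)
      thus ?thesis using fin0[of q] True qr by blast
    next
      case ap: False
      obtain lo lo' hi hi' where lo: "(lo,lo') \<in> P" and hi: "(hi,hi') \<in> P" and la: "lo < a" and ah: "a < hi"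
        and btw: "\<forall>b b'. (b,b') \<in> P \<longrightarrow> b \<le> lo \<or> hi \<le> b"
        using lohi[OF ga fin ar nP] by blast
      have r: "1 \<le> lo'" "hi' \<le> n" using F(1)[OF lo] F(1)[OF hi] by auto
      have s1: "lo < p \<longleftrightarrow> lo' < q" "p < hi \<longleftrightarrow> q < hi'"
        using F(3)[OF lo] F(3)[OF hi] unfolding close_def by auto
      obtain a' where a': "lo' < a'" "a' < hi'" "a' \<noteq> q"
      proof (cases "lo < p \<and> p < hi")
        case True
        have "close (2*1+1) (hi - lo) (hi' - lo')" using F(4)[OF lo hi] True by auto
        moreover have "hi - lo \<ge> 3" using True la ah ap by auto
        ultimately have "hi' - lo' \<ge> 3" unfolding close_def by auto
        thus ?thesis using that[of "if lo' + 1 = q then lo' + 2 else lo' + 1"] by auto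
      next
        case False
        have "close (2*1) (hi - lo) (hi' - lo')" using F(2)[OF lo hi] .
        moreover have "hi - lo \<ge> 2" using la ah by auto
        ultimately have "hi' - lo' \<ge> 2" unfolding close_def by auto
        moreover have "\<not>(lo' < q \<and> q < hi')" using False s1 by auto
        ultimately show ?thesis using that[of "lo' + 1"] by auto
      qed
      have cl: "\<forall>b b'. (b,b') \<in> P \<longrightarrow> close 1 (b - a) (b' - a')"
      proof (intro allI impI)
        fix b b' assume bP: "(b,b') \<in> P"
        show "close 1 (b - a) (b' - a')"
        proof (cases "b \<le> lo")
          case True
          have "close (2*1) (lo - b) (lo' - b')" using F(2)[OF bP lo] .
          hence "b' \<le> lo'" using True unfolding close_def by auto
          thus ?thesis using True la a' unfolding close_def by auto
        next
          case False
          hence bh: "hi \<le> b" using btw bP by auto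
          have "close (2*1) (b - hi) (b' - hi')" using F(2)[OF hi bP] .
          hence "hi' \<le> b'" using bh unfolding close_def by auto
          thus ?thesis using bh ah a' unfolding close_def by auto
        qed
      qed
      have "1 \<le> a'" "a' \<le> n" using a' r by auto
      thus ?thesis using fin0[OF _ _ _ cl] a' ap by blast
    qed
  qed
qed

definition Good :: "int \<Rightarrow> int \<Rightarrow> int \<Rightarrow> nat \<Rightarrow> (int \<times> int) set \<Rightarrow> bool" where
  "Good n p q r P \<longleftrightarrow> GA n p q P \<and> GC (2^r) P \<and> (r > 0 \<longrightarrow> GD (2^r) p q P)"

lemma forth_good:
  assumes g: "Good n p q (Suc r) P" and fin: "finite P" and ar: "1 \<le> a" "a \<le> n" and qr: "1 \<le> q" "q \<le> n"
  shows "\<exists>a'. 1 \<le> a' \<and> a' \<le> n \<and> Good n p q r (insert (a,a') P)"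
proof (cases r)
  case 0
  have "GA n p q P" "GC 2 P" "GD 2 p q P" using g 0 unfolding Good_def by auto
  from forth_zero[OF this fin ar qr] show ?thesis using 0 unfolding Good_def by auto
next
  case (Suc r')
  define t :: int where "t = 2^r"
  have t2: "t \<ge> 2" using Suc t_def by simp
  have "GA n p q P" "GC (2*t) P" "GD (2*t) p q P" using g unfolding Good_def t_def by auto
  from forth_full[OF t2 this fin ar qr] show ?thesis using Suc unfolding Good_def t_def by auto
qed

definition sw :: "(int \<times> int) set \<Rightarrow> (int \<times> int) set" where
  "sw P = (\<lambda>(a,b). (b,a)) ` P"

lemma sw_mem[simp]: "(a,b) \<in> sw P \<longleftrightarrow> (b,a) \<in> P"
  unfolding sw_def by force

lemma sw_sw[simp]: "sw (sw P) = P"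
  unfolding sw_def by force

lemma sw_insert[simp]: "sw (insert (a,b) P) = insert (b,a) (sw P)"
  unfolding sw_def by auto

lemma Good_sw:
  assumes g: "Good n p q r P" shows "Good n q p r (sw P)"
proof -
  have ga: "GA n p q P" and gc: "GC (2^r) P" and gd: "r > 0 \<longrightarrow> GD (2^r) p q P" using g unfolding Good_def by auto
  have "GA n q p (sw P)" using ga unfolding GA_def sw_mem by blast
  moreover have "GC (2^r) (sw P)" unfolding GC_def sw_mem
  proof (intro allI impI)
    fix a a' b b' assume "(a',a) \<in> P" "(b',b) \<in> P"
    hence "close (2^r) (b' - a') (b - a)" using gc unfolding GC_def by blast
    thus "close (2^r) (b - a) (b' - a')" using close_sym by blast
  qed
  moreover have "r > 0 \<longrightarrow> GD (2^r) q p (sw P)"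
  proof
    assume "r > 0"
    hence gd': "GD (2^r) p q P" using gd by auto
    show "GD (2^r) q p (sw P)" unfolding GD_def sw_mem
    proof (intro conjI allI impI)
      fix a a' assume "(a',a) \<in> P"
      hence "close (2^r-1) (a' - p) (a - q)" using gd' unfolding GD_def by blast
      thus "close (2^r-1) (a - q) (a' - p)" using close_sym by blast
    next
      fix a a' b b' assume "(a',a) \<in> P" "(b',b) \<in> P" "a < q \<and> q < b \<or> a' < p \<and> p < b'"
      hence "close (2^r+1) (b' - a') (b - a)" using gd' unfolding GD_def by blast
      thus "close (2^r+1) (b - a) (b' - a')" using close_sym by blast
    qed
  qed
  ultimately show ?thesis unfolding Good_def by blast
qed

lemma back_good:
  assumes g: "Good n p q (Suc r) P" and fin: "finite P" and ar: "1 \<le> a'" "a' \<le> n" and pr: "1 \<le> p" "p \<le> n"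
  shows "\<exists>a. 1 \<le> a \<and> a \<le> n \<and> Good n p q r (insert (a,a') P)"
proof -
  have "Good n q p (Suc r) (sw P)" using Good_sw[OF g] .
  moreover have "finite (sw P)" using fin unfolding sw_def by auto
  ultimately obtain a where a: "1 \<le> a" "a \<le> n" "Good n q p r (insert (a',a) (sw P))"
    using forth_good[OF _ _ ar pr] by blast
  have "Good n p q r (sw (insert (a',a) (sw P)))" using Good_sw[OF a(3)] .
  thus ?thesis using a by auto
qed

lemma Good_mono:
  assumes g: "Good n p q r P" and QP: "Q \<subseteq> P" and c: "(1,1) \<in> Q" "(n,n) \<in> Q"
  shows "Good n p q r Q"
proof -
  have ga: "GA n p q P" and gc: "GC (2^r) P" and gd: "r > 0 \<longrightarrow> GD (2^r) p q P" using g unfolding Good_def by auto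
  have "GA n p q Q" using ga c QP unfolding GA_def by (metis subsetD)
  moreover have "GC (2^r) Q" using gc QP unfolding GC_def by (meson subsetD)
  moreover have "r > 0 \<longrightarrow> GD (2^r) p q Q" using gd QP unfolding GD_def by (meson subsetD)
  ultimately show ?thesis unfolding Good_def by blast
qed

fun qrank :: "form \<Rightarrow> nat" where
  "qrank (Less s t) = 0"
| "qrank (Eq s t) = 0"
| "qrank (S t) = 0"
| "qrank (Neg f) = qrank f"
| "qrank (Conj f g) = max (qrank f) (qrank g)"
| "qrank (Disj f g) = max (qrank f) (qrank g)"
| "qrank (Ex x f) = Suc (qrank f)"
| "qrank (All x f) = Suc (qrank f)"

lemma qrank_le: "qrank f \<le> qcount f"
  by (induction f) auto

lemma finite_tvars: "finite (tvars t)" by (cases t) auto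
lemma finite_fv: "finite (free_vars f)" by (induction f) (auto simp: finite_tvars)

definition sstr :: "nat \<Rightarrow> nat \<Rightarrow> bool list" where
  "sstr n p = map (\<lambda>j. Suc j = p) [0..<n]"

lemma sstr_len[simp]: "length (sstr n p) = n" unfolding sstr_def by simp
lemma sstr_nth: "1 \<le> i \<Longrightarrow> i \<le> n \<Longrightarrow> sstr n p ! (i - 1) = (i = p)"
  unfolding sstr_def by auto

lemma sstr_nth': "Suc 0 \<le> i \<Longrightarrow> i \<le> n \<Longrightarrow> sstr n p ! (i - Suc 0) = (i = p)"
  using sstr_nth by simp

definition PP :: "nat \<Rightarrow> nat set \<Rightarrow> (nat \<Rightarrow> nat) \<Rightarrow> (nat \<Rightarrow> nat) \<Rightarrow> (int \<times> int) set" where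
  "PP n X \<sigma> \<sigma>' = {(1,1), (int n, int n)} \<union> (\<lambda>x. (int (\<sigma> x), int (\<sigma>' x))) ` X"

lemma PP_term: "tvars s \<subseteq> X \<Longrightarrow> (int (teval (sstr n p) \<sigma> s), int (teval (sstr n q) \<sigma>' s)) \<in> PP n X \<sigma> \<sigma>'"
  unfolding PP_def by (cases s) auto

lemma PP_mono: "X \<subseteq> Y \<Longrightarrow> PP n X \<sigma> \<sigma>' \<subseteq> PP n Y \<sigma> \<sigma>'"
  unfolding PP_def by auto

lemma PP_corner: "(1,1) \<in> PP n X \<sigma> \<sigma>'" "(int n, int n) \<in> PP n X \<sigma> \<sigma>'"
  unfolding PP_def by auto

lemma PP_finite: "finite X \<Longrightarrow> finite (PP n X \<sigma> \<sigma>')"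
  unfolding PP_def by auto

lemma PP_upd: "PP n X (\<sigma>(x := a)) (\<sigma>'(x := b)) \<subseteq> insert (int a, int b) (PP n (X - {x}) \<sigma> \<sigma>')"
  unfolding PP_def by auto

lemma close_ord:
  fixes a b a' b' :: nat and t :: int
  assumes "close t (int b - int a) (int b' - int a')" "t \<ge> 1"
  shows "(a < b \<longleftrightarrow> a' < b') \<and> (a = b \<longleftrightarrow> a' = b')"
  using assms unfolding close_def by auto

theorem EF:
  assumes pr: "1 \<le> p" "p \<le> n" and qr: "1 \<le> q" "q \<le> n"
  shows "qrank \<phi> \<le> r \<Longrightarrow> Good (int n) (int p) (int q) r (PP n (free_vars \<phi>) \<sigma> \<sigma>') \<Longrightarrow>
     holds (sstr n p) \<sigma> \<phi> = holds (sstr n q) \<sigma>' \<phi>"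
proof (induction \<phi> arbitrary: r \<sigma> \<sigma>')
  case (Less s t)
  let ?P = "PP n (free_vars (Less s t)) \<sigma> \<sigma>'"
  have m: "(int (teval (sstr n p) \<sigma> s), int (teval (sstr n q) \<sigma>' s)) \<in> ?P"
          "(int (teval (sstr n p) \<sigma> t), int (teval (sstr n q) \<sigma>' t)) \<in> ?P"
    by (rule PP_term; simp)+
  have "close (2^r) (int (teval (sstr n p) \<sigma> t) - int (teval (sstr n p) \<sigma> s))
                    (int (teval (sstr n q) \<sigma>' t) - int (teval (sstr n q) \<sigma>' s))"
    using Less.prems(2) m unfolding Good_def GC_def by blast
  from close_ord[OF this] show ?case by simp
next
  case (Eq s t)
  let ?P = "PP n (free_vars (Eq s t)) \<sigma> \<sigma>'"
  have m: "(int (teval (sstr n p) \<sigma> s), int (teval (sstr n q) \<sigma>' s)) \<in> ?P"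
          "(int (teval (sstr n p) \<sigma> t), int (teval (sstr n q) \<sigma>' t)) \<in> ?P"
    by (rule PP_term; simp)+
  have "close (2^r) (int (teval (sstr n p) \<sigma> t) - int (teval (sstr n p) \<sigma> s))
                    (int (teval (sstr n q) \<sigma>' t) - int (teval (sstr n q) \<sigma>' s))"
    using Eq.prems(2) m unfolding Good_def GC_def by blast
  from close_ord[OF this] show ?case by simp
next
  case (S t)
  let ?P = "PP n (free_vars (S t)) \<sigma> \<sigma>'"
  have m: "(int (teval (sstr n p) \<sigma> t), int (teval (sstr n q) \<sigma>' t)) \<in> ?P"
    by (rule PP_term; simp)
  then have g: "1 \<le> int (teval (sstr n p) \<sigma> t) \<and> int (teval (sstr n p) \<sigma> t) \<le> int n \<and>
     1 \<le> int (teval (sstr n q) \<sigma>' t) \<and> int (teval (sstr n q) \<sigma>' t) \<le> int n \<and>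
     (int (teval (sstr n p) \<sigma> t) = int p \<longleftrightarrow> int (teval (sstr n q) \<sigma>' t) = int q)"
    using S.prems(2) unfolding Good_def GA_def by blast
  show ?case using g by (auto simp: Let_def sstr_nth')
next
  case (Neg f)
  thus ?case by simp
next
  case (Conj f g)
  have "Good (int n) (int p) (int q) r (PP n (free_vars f) \<sigma> \<sigma>')"
    by (rule Good_mono[OF Conj.prems(2) PP_mono PP_corner]) auto
  moreover have "Good (int n) (int p) (int q) r (PP n (free_vars g) \<sigma> \<sigma>')"
    by (rule Good_mono[OF Conj.prems(2) PP_mono PP_corner]) auto
  ultimately show ?case using Conj by auto
next
  case (Disj f g)
  have "Good (int n) (int p) (int q) r (PP n (free_vars f) \<sigma> \<sigma>')"
    by (rule Good_mono[OF Disj.prems(2) PP_mono PP_corner]) auto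
  moreover have "Good (int n) (int p) (int q) r (PP n (free_vars g) \<sigma> \<sigma>')"
    by (rule Good_mono[OF Disj.prems(2) PP_mono PP_corner]) auto
  ultimately show ?case using Disj by auto
next
  case (Ex x f)
  obtain r' where r: "r = Suc r'" and qr': "qrank f \<le> r'" using Ex.prems(1) by (cases r) auto
  let ?P = "PP n (free_vars f - {x}) \<sigma> \<sigma>'"
  have g: "Good (int n) (int p) (int q) (Suc r') ?P" using Ex.prems(2) r by simp
  have fin: "finite ?P" by (rule PP_finite) (simp add: finite_fv)
  have step: "holds (sstr n p) (\<sigma>(x := a)) f = holds (sstr n q) (\<sigma>'(x := b)) f"
    if "Good (int n) (int p) (int q) r' (insert (int a, int b) ?P)" for a b
  proof -
    have "Good (int n) (int p) (int q) r' (PP n (free_vars f) (\<sigma>(x := a)) (\<sigma>'(x := b)))"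
      by (rule Good_mono[OF that PP_upd PP_corner])
    thus ?thesis using Ex.IH[OF qr'] by blast
  qed
  have fw: "\<exists>b\<in>{1..n}. holds (sstr n p) (\<sigma>(x := a)) f = holds (sstr n q) (\<sigma>'(x := b)) f"
    if ain: "a \<in> {1..n}" for a
  proof -
    obtain a' where a': "1 \<le> a'" "a' \<le> int n" "Good (int n) (int p) (int q) r' (insert (int a, a') ?P)"
    proof -
      have "1 \<le> int a" "int a \<le> int n" "1 \<le> int q" "int q \<le> int n" using ain qr by auto
      from forth_good[OF g fin this] show ?thesis using that by blast
    qed
    have "a' = int (nat a')" using a' by simp
    hence "Good (int n) (int p) (int q) r' (insert (int a, int (nat a')) ?P)" using a' by simp
    thus ?thesis using step a' by (intro bexI[of _ "nat a'"]) auto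
  qed
  have bw: "\<exists>a\<in>{1..n}. holds (sstr n p) (\<sigma>(x := a)) f = holds (sstr n q) (\<sigma>'(x := b)) f"
    if bin: "b \<in> {1..n}" for b
  proof -
    obtain a' where a': "1 \<le> a'" "a' \<le> int n" "Good (int n) (int p) (int q) r' (insert (a', int b) ?P)"
    proof -
      have "1 \<le> int b" "int b \<le> int n" "1 \<le> int p" "int p \<le> int n" using bin pr by auto
      from back_good[OF g fin this] show ?thesis using that by blast
    qed
    have "a' = int (nat a')" using a' by simp
    hence "Good (int n) (int p) (int q) r' (insert (int (nat a'), int b) ?P)" using a' by simp
    thus ?thesis using step a' by (intro bexI[of _ "nat a'"]) auto
  qed
  have e1: "holds (sstr n p) \<sigma> (Ex x f) = (\<exists>a\<in>{1..n}. holds (sstr n p) (\<sigma>(x := a)) f)" by simp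
  have e2: "holds (sstr n q) \<sigma>' (Ex x f) = (\<exists>b\<in>{1..n}. holds (sstr n q) (\<sigma>'(x := b)) f)" by simp
  show ?case unfolding e1 e2 using fw bw by blast
next
  case (All x f)
  obtain r' where r: "r = Suc r'" and qr': "qrank f \<le> r'" using All.prems(1) by (cases r) auto
  let ?P = "PP n (free_vars f - {x}) \<sigma> \<sigma>'"
  have g: "Good (int n) (int p) (int q) (Suc r') ?P" using All.prems(2) r by simp
  have fin: "finite ?P" by (rule PP_finite) (simp add: finite_fv)
  have step: "holds (sstr n p) (\<sigma>(x := a)) f = holds (sstr n q) (\<sigma>'(x := b)) f"
    if "Good (int n) (int p) (int q) r' (insert (int a, int b) ?P)" for a b
  proof -
    have "Good (int n) (int p) (int q) r' (PP n (free_vars f) (\<sigma>(x := a)) (\<sigma>'(x := b)))"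
      by (rule Good_mono[OF that PP_upd PP_corner])
    thus ?thesis using All.IH[OF qr'] by blast
  qed
  have fw: "\<exists>b\<in>{1..n}. holds (sstr n p) (\<sigma>(x := a)) f = holds (sstr n q) (\<sigma>'(x := b)) f"
    if ain: "a \<in> {1..n}" for a
  proof -
    obtain a' where a': "1 \<le> a'" "a' \<le> int n" "Good (int n) (int p) (int q) r' (insert (int a, a') ?P)"
    proof -
      have "1 \<le> int a" "int a \<le> int n" "1 \<le> int q" "int q \<le> int n" using ain qr by auto
      from forth_good[OF g fin this] show ?thesis using that by blast
    qed
    have "a' = int (nat a')" using a' by simp
    hence "Good (int n) (int p) (int q) r' (insert (int a, int (nat a')) ?P)" using a' by simp
    thus ?thesis using step a' by (intro bexI[of _ "nat a'"]) auto
  qed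
  have bw: "\<exists>a\<in>{1..n}. holds (sstr n p) (\<sigma>(x := a)) f = holds (sstr n q) (\<sigma>'(x := b)) f"
    if bin: "b \<in> {1..n}" for b
  proof -
    obtain a' where a': "1 \<le> a'" "a' \<le> int n" "Good (int n) (int p) (int q) r' (insert (a', int b) ?P)"
    proof -
      have "1 \<le> int b" "int b \<le> int n" "1 \<le> int p" "int p \<le> int n" using bin pr by auto
      from back_good[OF g fin this] show ?thesis using that by blast
    qed
    have "a' = int (nat a')" using a' by simp
    hence "Good (int n) (int p) (int q) r' (insert (int (nat a'), int b) ?P)" using a' by simp
    thus ?thesis using step a' by (intro bexI[of _ "nat a'"]) auto
  qed
  have e1: "holds (sstr n p) \<sigma> (All x f) = (\<forall>a\<in>{1..n}. holds (sstr n p) (\<sigma>(x := a)) f)" by simp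
  have e2: "holds (sstr n q) \<sigma>' (All x f) = (\<forall>b\<in>{1..n}. holds (sstr n q) (\<sigma>'(x := b)) f)" by simp
  show ?case unfolding e1 e2 using fw bw by blast
qed

definition TT :: form where "TT = Eq Min Min"
definition FF :: form where "FF = Neg (Eq Min Min)"
definition inside :: "fterm \<Rightarrow> fterm \<Rightarrow> fterm \<Rightarrow> form" where
  "inside z lo hi = Conj (Less lo z) (Less z hi)"
definition imp :: "form \<Rightarrow> form \<Rightarrow> form" where "imp a b = Disj (Neg a) b"

fun ta :: "nat \<Rightarrow> nat" and tb :: "nat \<Rightarrow> nat" where
  "ta 0 = 0"
| "ta (Suc k) = 2 * tb k + 1"
| "tb 0 = 0"
| "tb (Suc 0) = 0"
| "tb (Suc (Suc k)) = 2 * ta (Suc k)"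

definition stepF :: "nat \<Rightarrow> nat \<Rightarrow> nat \<Rightarrow> fterm \<Rightarrow> fterm \<Rightarrow> form \<Rightarrow> form \<Rightarrow> form" where
  "stepF j m1 m2 lo hi A1 A2 =
    Conj (inside (Var (Suc (Suc j))) lo hi)
     (Conj (imp (inside (Var (Suc j)) lo (Var (Suc (Suc j)))) A1)
      (Conj (imp (inside (Var (Suc j)) (Var (Suc (Suc j))) hi) A2)
       (Conj (imp (Neg (Less lo (Var (Suc j)))) (if m1 = 0 then TT else inside (Var j) lo (Var (Suc (Suc j)))))
             (imp (Neg (Less (Var (Suc j)) hi)) (if m2 = 0 then TT else inside (Var j) (Var (Suc (Suc j))) hi)))))"

fun ME :: "nat \<Rightarrow> nat \<Rightarrow> fterm \<Rightarrow> fterm \<Rightarrow> form" and MAin :: "nat \<Rightarrow> nat \<Rightarrow> fterm \<Rightarrow> fterm \<Rightarrow> form" where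
  "ME 0 m lo hi = (if m = 0 then TT else FF)"
| "ME (Suc 0) m lo hi = (if m = 0 then TT else if m = 1 then inside (Var 1) lo hi else FF)"
| "ME (Suc (Suc j)) m lo hi = (if m = 0 then TT else if ta (Suc (Suc j)) < m then FF else
     stepF j (min (tb (Suc j)) (m - 1)) (m - 1 - min (tb (Suc j)) (m - 1)) lo hi
       (MAin (Suc j) (min (tb (Suc j)) (m - 1)) lo (Var (Suc (Suc j))))
       (MAin (Suc j) (m - 1 - min (tb (Suc j)) (m - 1)) (Var (Suc (Suc j))) hi))"
| "MAin 0 m lo hi = (if m = 0 then TT else FF)"
| "MAin (Suc 0) m lo hi = (if m = 0 then TT else FF)"
| "MAin (Suc (Suc j)) m lo hi = (if m = 0 then TT else if tb (Suc (Suc j)) < m then FF else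
     Disj (if min (ta (Suc j)) (m - 1) = 0 then TT
           else Conj (inside (Var (Suc j)) lo (Var (Suc (Suc j)))) (ME (Suc j) (min (ta (Suc j)) (m - 1)) lo (Var (Suc (Suc j)))))
          (Conj (inside (Var (Suc j)) (Var (Suc (Suc j))) hi) (ME (Suc j) (m - min (ta (Suc j)) (m - 1)) (Var (Suc (Suc j))) hi)))"

fun pre :: "nat \<Rightarrow> bool \<Rightarrow> form \<Rightarrow> form" where
  "pre 0 Q M = M"
| "pre (Suc k) Q M = (if Q then Ex (Suc k) (pre k False M) else All (Suc k) (pre k True M))"

lemma teval_agree: "(\<forall>x\<in>tvars t. \<sigma> x = \<tau> x) \<Longrightarrow> teval w \<sigma> t = teval w \<tau> t"
  by (cases t) auto

lemma holds_agree: "(\<forall>x\<in>free_vars f. \<sigma> x = \<tau> x) \<Longrightarrow> holds w \<sigma> f = holds w \<tau> f"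
proof (induction f arbitrary: \<sigma> \<tau>)
  case (Less s t) thus ?case using teval_agree[of s \<sigma> \<tau> w] teval_agree[of t \<sigma> \<tau> w] by simp
next
  case (Eq s t) thus ?case using teval_agree[of s \<sigma> \<tau> w] teval_agree[of t \<sigma> \<tau> w] by simp
next
  case (S t) thus ?case using teval_agree[of t \<sigma> \<tau> w] by simp
next
  case (Ex x f)
  have "\<And>a. holds w (\<sigma>(x:=a)) f = holds w (\<tau>(x:=a)) f" by (rule Ex.IH) (use Ex.prems in auto)
  thus ?case by simp
next
  case (All x f)
  have "\<And>a. holds w (\<sigma>(x:=a)) f = holds w (\<tau>(x:=a)) f" by (rule All.IH) (use All.prems in auto)
  thus ?case by simp
next
  case (Conj f g)
  have "holds w \<sigma> f = holds w \<tau> f" by (rule Conj.IH(1)) (use Conj.prems in auto)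
  moreover have "holds w \<sigma> g = holds w \<tau> g" by (rule Conj.IH(2)) (use Conj.prems in auto)
  ultimately show ?case by simp
next
  case (Disj f g)
  have "holds w \<sigma> f = holds w \<tau> f" by (rule Disj.IH(1)) (use Disj.prems in auto)
  moreover have "holds w \<sigma> g = holds w \<tau> g" by (rule Disj.IH(2)) (use Disj.prems in auto)
  ultimately show ?case by simp
qed auto

lemma pre_cong:
  "(\<And>\<tau>. (\<forall>x. (x = 0 \<or> k < x) \<longrightarrow> \<tau> x = \<sigma> x) \<Longrightarrow> holds w \<tau> M = holds w \<tau> M') \<Longrightarrow>
   holds w \<sigma> (pre k Q M) = holds w \<sigma> (pre k Q M')"
proof (induction k arbitrary: \<sigma> Q)
  case 0
  show ?case using 0[of \<sigma>] by simp
next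
  case (Suc k)
  have "\<And>a. holds w (\<sigma>(Suc k := a)) (pre k Q' M) = holds w (\<sigma>(Suc k := a)) (pre k Q' M')" for Q'
    by (rule Suc.IH) (use Suc.prems in auto)
  thus ?case by simp
qed

lemma pre_const:
  assumes "\<forall>x\<in>free_vars M. x = 0 \<or> k < x" "length w \<ge> 1"
  shows "holds w \<sigma> (pre k Q M) = holds w \<sigma> M"
  using assms
proof (induction k arbitrary: \<sigma> Q)
  case 0 thus ?case by simp
next
  case (Suc k)
  have ih: "holds w (\<sigma>(Suc k := a)) (pre k Q' M) = holds w \<sigma> M" for a Q'
  proof -
    have "holds w (\<sigma>(Suc k := a)) (pre k Q' M) = holds w (\<sigma>(Suc k := a)) M"
      by (rule Suc.IH) (use Suc.prems in auto)
    also have "\<dots> = holds w \<sigma> M" by (rule holds_agree) (use Suc.prems in auto)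
    finally show ?thesis .
  qed
  have ne: "\<exists>a. a \<in> {1..length w}" using Suc.prems by auto
  show ?case using ih ne by auto
qed

lemma pre_conj:
  assumes "\<forall>x\<in>free_vars P. x = 0 \<or> k < x" "length w \<ge> 1"
  shows "holds w \<sigma> (pre k Q (Conj P M)) = (holds w \<sigma> P \<and> holds w \<sigma> (pre k Q M))"
  using assms
proof (induction k arbitrary: \<sigma> Q)
  case 0 thus ?case by simp
next
  case (Suc k)
  have ih: "holds w (\<sigma>(Suc k := a)) (pre k Q' (Conj P M)) = (holds w \<sigma> P \<and> holds w (\<sigma>(Suc k := a)) (pre k Q' M))" for a Q'
  proof -
    have "holds w (\<sigma>(Suc k := a)) (pre k Q' (Conj P M)) = (holds w (\<sigma>(Suc k := a)) P \<and> holds w (\<sigma>(Suc k := a)) (pre k Q' M))"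
      by (rule Suc.IH) (use Suc.prems in auto)
    moreover have "holds w (\<sigma>(Suc k := a)) P = holds w \<sigma> P" by (rule holds_agree) (use Suc.prems in auto)
    ultimately show ?thesis by simp
  qed
  have ne: "\<exists>a. a \<in> {1..length w}" using Suc.prems by auto
  show ?case using ih ne by auto
qed

lemma fv_pre: "free_vars (pre k Q M) = free_vars M - {1..k}"
  by (induction k arbitrary: Q) auto

lemma qcount_pre: "qcount (pre k Q M) = k + qcount M"
  by (induction k arbitrary: Q) auto

lemma qfree_qcount: "qfree f \<Longrightarrow> qcount f = 0"
  by (induction f) auto

lemma ta_pos: "ta (Suc k) \<ge> 1" by simp
lemma tb_small: "k < 2 \<Longrightarrow> tb k = 0"
proof -
  assume "k < 2"
  hence "k = 0 \<or> k = Suc 0" by auto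
  thus ?thesis by auto
qed

lemma tb_pos: "tb k \<ge> 1 \<Longrightarrow> k \<ge> 2"
  using tb_small by (metis not_less not_one_le_zero)

lemma tab_lower: "k \<ge> 2 \<Longrightarrow> ta k \<ge> 2^(k-2) \<and> tb k \<ge> 2^(k-2)"
proof (induction k rule: less_induct)
  case (less k)
  show ?case
  proof (cases "k \<le> 3")
    case True
    hence "k = 2 \<or> k = 3" using less.prems by auto
    thus ?thesis by (auto simp: numeral_eq_Suc)
  next
    case False
    then obtain j where k: "k = Suc j" and j: "j \<ge> 3" by (cases k) auto
    have ih: "ta j \<ge> 2^(j-2)" "tb j \<ge> 2^(j-2)" using less.IH[of j] k j by auto
    obtain i where ji: "j = Suc i" using j by (cases j) auto
    have "ta k = 2 * tb j + 1" using k by simp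
    moreover have "tb k = 2 * ta j" using k ji by simp
    moreover have "k - 2 = Suc (j - 2)" using k j by auto
    hence "(2::nat)^(k-2) = 2 * 2^(j-2)" by simp
    ultimately show ?thesis using ih by linarith
  qed
qed

lemma qfree_ME: "qfree (ME k m lo hi) \<and> qfree (MAin k m lo hi)"
proof (induction k arbitrary: m lo hi rule: less_induct)
  case (less k)
  show ?case
  proof (cases k)
    case 0 thus ?thesis by (simp add: TT_def FF_def)
  next
    case (Suc k')
    show ?thesis
    proof (cases k')
      case 0 thus ?thesis using Suc by (simp add: TT_def FF_def inside_def)
    next
      case (Suc j)
      have ih: "\<And>m lo hi. qfree (ME (Suc j) m lo hi) \<and> qfree (MAin (Suc j) m lo hi)"
        using less.IH \<open>k = Suc k'\<close> Suc by auto
      show ?thesis using \<open>k = Suc k'\<close> Suc ih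
        by (simp add: TT_def FF_def inside_def stepF_def imp_def)
    qed
  qed
qed

lemma c2_bound: "m \<le> tb (Suc (Suc j)) \<Longrightarrow> m - min (ta (Suc j)) (m - 1) \<le> ta (Suc j)"
  by (cases "ta (Suc j) \<le> m - 1") (auto simp: min_def)

lemma fv_ME: "(\<forall>m lo hi. m \<le> ta k \<longrightarrow> free_vars (ME k m lo hi) \<subseteq> {1..k} \<union> tvars lo \<union> tvars hi) \<and>
              (\<forall>m lo hi. m \<le> tb k \<longrightarrow> free_vars (MAin k m lo hi) \<subseteq> {1..k} \<union> tvars lo \<union> tvars hi)"
proof (induction k rule: less_induct)
  case (less k)
  show ?case
  proof (cases k)
    case 0 thus ?thesis by (simp add: TT_def FF_def)
  next
    case (Suc k')
    show ?thesis
    proof (cases k')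
      case 0 thus ?thesis using Suc by (auto simp: TT_def FF_def inside_def)
    next
      case (Suc j)
      have k: "k = Suc (Suc j)" using \<open>k = Suc k'\<close> Suc by simp
      have ih: "\<And>m lo hi. m \<le> ta (Suc j) \<Longrightarrow> free_vars (ME (Suc j) m lo hi) \<subseteq> {1..Suc j} \<union> tvars lo \<union> tvars hi"
               "\<And>m lo hi. m \<le> tb (Suc j) \<Longrightarrow> free_vars (MAin (Suc j) m lo hi) \<subseteq> {1..Suc j} \<union> tvars lo \<union> tvars hi"
        using less.IH[of "Suc j"] k by auto
      have A: "free_vars (ME k m lo hi) \<subseteq> {1..k} \<union> tvars lo \<union> tvars hi" if m: "m \<le> ta k" for m lo hi
      proof (cases "m = 0 \<or> ta k < m")
        case True thus ?thesis using k by (auto simp: TT_def FF_def)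
      next
        case False
        define m1 where "m1 = min (tb (Suc j)) (m - 1)"
        define m2 where "m2 = m - 1 - m1"
        have b: "m1 \<le> tb (Suc j)" "m2 \<le> tb (Suc j)" using m k unfolding m1_def m2_def by auto
        have j1: "j \<ge> 1" if "m1 \<noteq> 0 \<or> m2 \<noteq> 0"
        proof -
          have "tb (Suc j) \<ge> 1" using that b by auto
          thus ?thesis using tb_pos[of "Suc j"] by auto
        qed
        have e: "ME k m lo hi = stepF j m1 m2 lo hi (MAin (Suc j) m1 lo (Var (Suc (Suc j)))) (MAin (Suc j) m2 (Var (Suc (Suc j))) hi)"
          using False k unfolding m1_def m2_def by simp
        have s1: "free_vars (MAin (Suc j) m1 lo (Var (Suc (Suc j)))) \<subseteq> {1..k} \<union> tvars lo \<union> tvars hi"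
          using ih(2)[OF b(1), of lo "Var (Suc (Suc j))"] k by auto
        have s2: "free_vars (MAin (Suc j) m2 (Var (Suc (Suc j))) hi) \<subseteq> {1..k} \<union> tvars lo \<union> tvars hi"
          using ih(2)[OF b(2), of "Var (Suc (Suc j))" hi] k by auto
        show ?thesis unfolding e stepF_def using s1 s2 j1 k
          by (auto simp: TT_def inside_def imp_def)
      qed
      have B: "free_vars (MAin k m lo hi) \<subseteq> {1..k} \<union> tvars lo \<union> tvars hi" if m: "m \<le> tb k" for m lo hi
      proof (cases "m = 0 \<or> tb k < m")
        case True thus ?thesis using k by (auto simp: TT_def FF_def)
      next
        case False
        define c1 where "c1 = min (ta (Suc j)) (m - 1)"
        have b: "c1 \<le> ta (Suc j)" "m - c1 \<le> ta (Suc j)" using m k c2_bound unfolding c1_def by auto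
        have e: "MAin k m lo hi = Disj (if c1 = 0 then TT else Conj (inside (Var (Suc j)) lo (Var (Suc (Suc j)))) (ME (Suc j) c1 lo (Var (Suc (Suc j)))))
          (Conj (inside (Var (Suc j)) (Var (Suc (Suc j))) hi) (ME (Suc j) (m - c1) (Var (Suc (Suc j))) hi))"
          using False k unfolding c1_def by simp
        have s1: "free_vars (ME (Suc j) c1 lo (Var (Suc (Suc j)))) \<subseteq> {1..k} \<union> tvars lo \<union> tvars hi"
          using ih(1)[OF b(1), of lo "Var (Suc (Suc j))"] k by auto
        have s2: "free_vars (ME (Suc j) (m - c1) (Var (Suc (Suc j))) hi) \<subseteq> {1..k} \<union> tvars lo \<union> tvars hi"
          using ih(1)[OF b(2), of "Var (Suc (Suc j))" hi] k by auto
        show ?thesis unfolding e using s1 s2 k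
          by (auto simp: TT_def inside_def)
      qed
      show ?thesis using A B by blast
    qed
  qed
qed

lemma comb:
  fixes l a c1 c2 m1 :: nat
  assumes "c1 + c2 = m1" "m1 \<ge> 1" "c2 \<ge> 1" "c1 = 0 \<longrightarrow> m1 = 1" "l < a"
  shows "((\<forall>c. l < c \<and> c < a \<longrightarrow> c1 = 0 \<or> l + c1 < c \<or> c + c2 < a) \<and> l + 1 < a) \<longleftrightarrow> l + m1 < a"
proof
  assume h: "(\<forall>c. l < c \<and> c < a \<longrightarrow> c1 = 0 \<or> l + c1 < c \<or> c + c2 < a) \<and> l + 1 < a"
  show "l + m1 < a"
  proof (cases "c1 = 0")
    case True thus ?thesis using assms h by auto
  next
    case False
    define c where "c = min (l + c1) (a - 1)"
    have "l < c" "c < a" using h False c_def by auto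
    hence "l + c1 < c \<or> c + c2 < a" using h False by blast
    thus ?thesis using c_def assms by (auto simp: min_def split: if_splits)
  qed
next
  assume h: "l + m1 < a"
  show "(\<forall>c. l < c \<and> c < a \<longrightarrow> c1 = 0 \<or> l + c1 < c \<or> c + c2 < a) \<and> l + 1 < a"
    using h assms by auto
qed

definition innerA :: "nat \<Rightarrow> nat \<Rightarrow> nat \<Rightarrow> nat \<Rightarrow> nat \<Rightarrow> bool" where
  "innerA T m l c h \<longleftrightarrow> (m = 0 \<or> min T (m-1) = 0 \<or> l + min T (m-1) < c \<or> c + (m - min T (m-1)) < h)"

lemma ME_inside:
  assumes n1: "length w \<ge> 1" and m: "m \<ge> 1" "m \<le> ta (Suc j)"
    and vars: "\<forall>x\<in>tvars lo \<union> tvars hi. Suc j < x"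
    and h: "holds w \<sigma> (pre j False (ME (Suc j) m lo hi))"
  shows "teval w \<sigma> lo < \<sigma> (Suc j) \<and> \<sigma> (Suc j) < teval w \<sigma> hi"
proof (cases j)
  case 0
  have "m = 1" using m 0 by auto
  thus ?thesis using h 0 by (simp add: inside_def)
next
  case (Suc i)
  define m1 where "m1 = min (tb (Suc i)) (m - 1)"
  define m2 where "m2 = m - 1 - m1"
  have e: "ME (Suc j) m lo hi = Conj (inside (Var (Suc j)) lo hi) (Conj (imp (inside (Var (Suc i)) lo (Var (Suc (Suc i)))) (MAin (Suc i) m1 lo (Var (Suc (Suc i)))))
     (Conj (imp (inside (Var (Suc i)) (Var (Suc (Suc i))) hi) (MAin (Suc i) m2 (Var (Suc (Suc i))) hi))
       (Conj (imp (Neg (Less lo (Var (Suc i)))) (if m1 = 0 then TT else inside (Var i) lo (Var (Suc (Suc i)))))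
             (imp (Neg (Less (Var (Suc i)) hi)) (if m2 = 0 then TT else inside (Var i) (Var (Suc (Suc i))) hi)))))"
    using m Suc unfolding m1_def m2_def by (simp add: stepF_def)
  have fv: "\<forall>x\<in>free_vars (inside (Var (Suc j)) lo hi). x = 0 \<or> j < x"
  proof
    fix x assume "x \<in> free_vars (inside (Var (Suc j)) lo hi)"
    hence "x \<in> tvars lo \<union> tvars hi \<or> x = Suc j" by (auto simp: inside_def)
    moreover have "x \<in> tvars lo \<union> tvars hi \<Longrightarrow> Suc j < x" using vars by blast
    ultimately show "x = 0 \<or> j < x" by auto
  qed
  have "holds w \<sigma> (inside (Var (Suc j)) lo hi)"
    using h unfolding e pre_conj[OF fv n1] by blast
  thus ?thesis by (simp add: inside_def)
qed

lemma pre_Suc_ex: "holds w \<sigma> (pre (Suc k) True M) = (\<exists>a\<in>{1..length w}. holds w (\<sigma>(Suc k := a)) (pre k False M))"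
  by simp
lemma pre_Suc_all: "holds w \<sigma> (pre (Suc k) False M) = (\<forall>a\<in>{1..length w}. holds w (\<sigma>(Suc k := a)) (pre k True M))"
  by simp

lemma teval_agree2: "(\<forall>x\<in>tvars t. k < x) \<Longrightarrow> (\<forall>x. (x = 0 \<or> k < x) \<longrightarrow> \<tau> x = \<sigma> x) \<Longrightarrow> teval w \<tau> t = teval w \<sigma> t"
  by (cases t) auto

lemma pre_TT: "length w \<ge> 1 \<Longrightarrow> holds w \<sigma> (pre k Q TT)"
  using pre_const[of TT k w \<sigma> Q] by (simp add: TT_def)
lemma pre_FF: "length w \<ge> 1 \<Longrightarrow> \<not> holds w \<sigma> (pre k Q FF)"
  using pre_const[of FF k w \<sigma> Q] by (simp add: FF_def)

lemma pre_inside: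
  assumes n1: "length w \<ge> 1" and vars: "\<forall>x\<in>tvars lo \<union> tvars hi. Suc i < x"
  shows "holds w \<sigma> (pre (Suc i) True (inside (Var (Suc i)) lo hi)) = (teval w \<sigma> lo + 1 < teval w \<sigma> hi \<and> teval w \<sigma> lo + 1 \<le> length w)"
proof -
  have fv: "\<forall>x\<in>free_vars (inside (Var (Suc i)) lo hi). x = 0 \<or> i < x"
  proof
    fix x assume "x \<in> free_vars (inside (Var (Suc i)) lo hi)"
    hence "x \<in> tvars lo \<union> tvars hi \<or> x = Suc i" by (auto simp: inside_def)
    moreover have "x \<in> tvars lo \<union> tvars hi \<Longrightarrow> Suc i < x" using vars by blast
    ultimately show "x = 0 \<or> i < x" by auto
  qed
  have tl: "teval w (\<sigma>(Suc i := d)) lo = teval w \<sigma> lo" "teval w (\<sigma>(Suc i := d)) hi = teval w \<sigma> hi" for d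
    by (rule teval_agree; use vars in force)+
  have "holds w \<sigma> (pre (Suc i) True (inside (Var (Suc i)) lo hi)) =
        (\<exists>d\<in>{1..length w}. holds w (\<sigma>(Suc i := d)) (inside (Var (Suc i)) lo hi))"
    using pre_const[OF fv n1] by simp
  also have "\<dots> = (\<exists>d\<in>{1..length w}. teval w \<sigma> lo < d \<and> d < teval w \<sigma> hi)"
    using tl by (simp add: inside_def)
  also have "\<dots> = (teval w \<sigma> lo + 1 < teval w \<sigma> hi \<and> teval w \<sigma> lo + 1 \<le> length w)"
  proof
    assume "\<exists>d\<in>{1..length w}. teval w \<sigma> lo < d \<and> d < teval w \<sigma> hi"
    thus "teval w \<sigma> lo + 1 < teval w \<sigma> hi \<and> teval w \<sigma> lo + 1 \<le> length w" by auto
  next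
    assume "teval w \<sigma> lo + 1 < teval w \<sigma> hi \<and> teval w \<sigma> lo + 1 \<le> length w"
    thus "\<exists>d\<in>{1..length w}. teval w \<sigma> lo < d \<and> d < teval w \<sigma> hi"
      by (intro bexI[of _ "teval w \<sigma> lo + 1"]) auto
  qed
  finally show ?thesis .
qed

lemma side:
  fixes l a m j :: nat
  assumes mb: "m \<le> tb (Suc j)" and la: "l < a"
  shows "((\<forall>c. l < c \<and> c < a \<longrightarrow> innerA (ta j) m l c a) \<and> (m = 0 \<or> l + 1 < a)) \<longleftrightarrow> l + m < a"
proof (cases "m = 0")
  case True thus ?thesis using la by (simp add: innerA_def)
next
  case False
  define c1 where "c1 = min (ta j) (m - 1)"
  define c2 where "c2 = m - c1"
  have c12: "c1 + c2 = m" "c2 \<ge> 1" using False c1_def c2_def by auto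
  have c10: "c1 = 0 \<longrightarrow> m = 1"
  proof
    assume c0: "c1 = 0"
    show "m = 1"
    proof (rule ccontr)
      assume "m \<noteq> 1"
      hence "m \<ge> 2" using False by auto
      hence "tb (Suc j) \<ge> 1" using mb by auto
      hence "j \<ge> 1" using tb_pos[of "Suc j"] by auto
      then obtain i where "j = Suc i" by (cases j) auto
      hence "ta j \<ge> 1" by simp
      thus False using c0 c1_def \<open>m \<ge> 2\<close> by auto
    qed
  qed
  have ia: "innerA (ta j) m l c a = (c1 = 0 \<or> l + c1 < c \<or> c + c2 < a)" for c
    unfolding innerA_def c1_def[symmetric] c2_def[symmetric] using False by simp
  show ?thesis unfolding ia using comb[OF c12(1) _ c12(2) c10 la] False by auto
qed

lemma LStep:
  fixes w \<sigma> j m1 m2 lo hi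
  assumes n1: "length w \<ge> 1"
    and LA: "\<And>m \<sigma> lo hi. m \<le> tb (Suc j) \<Longrightarrow> \<forall>x\<in>tvars lo \<union> tvars hi. Suc j < x \<Longrightarrow>
              1 \<le> teval w \<sigma> lo \<Longrightarrow> teval w \<sigma> hi \<le> length w \<Longrightarrow>
              teval w \<sigma> lo < \<sigma> (Suc j) \<Longrightarrow> \<sigma> (Suc j) < teval w \<sigma> hi \<Longrightarrow>
              holds w \<sigma> (pre j True (MAin (Suc j) m lo hi)) = innerA (ta j) m (teval w \<sigma> lo) (\<sigma> (Suc j)) (teval w \<sigma> hi)"
    and mb: "m1 \<le> tb (Suc j)" "m2 \<le> tb (Suc j)"
    and vars: "\<forall>x\<in>tvars lo \<union> tvars hi. Suc (Suc j) < x"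
    and rl: "1 \<le> teval w \<sigma> lo" and rh: "teval w \<sigma> hi \<le> length w" and rl2: "teval w \<sigma> lo \<le> length w"
  shows "holds w \<sigma> (pre (Suc j) False (stepF j m1 m2 lo hi (MAin (Suc j) m1 lo (Var (Suc (Suc j)))) (MAin (Suc j) m2 (Var (Suc (Suc j))) hi)))
     = (teval w \<sigma> lo + m1 < \<sigma> (Suc (Suc j)) \<and> \<sigma> (Suc (Suc j)) + m2 < teval w \<sigma> hi)"
proof -
  define n where "n = length w"
  define l where "l = teval w \<sigma> lo"
  define h where "h = teval w \<sigma> hi"
  define a where "a = \<sigma> (Suc (Suc j))"
  define A1 where "A1 = MAin (Suc j) m1 lo (Var (Suc (Suc j)))"
  define A2 where "A2 = MAin (Suc j) m2 (Var (Suc (Suc j))) hi"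
  define N1 where "N1 = (if m1 = 0 then TT else inside (Var j) lo (Var (Suc (Suc j))))"
  define N2 where "N2 = (if m2 = 0 then TT else inside (Var j) (Var (Suc (Suc j))) hi)"
  define M where "M = stepF j m1 m2 lo hi A1 A2"
  have vlo: "\<forall>x\<in>tvars lo. Suc (Suc j) < x" and vhi: "\<forall>x\<in>tvars hi. Suc (Suc j) < x" using vars by blast+
  have vlo': "\<forall>x\<in>tvars lo. j < x"
  proof
    fix x assume "x \<in> tvars lo"
    hence "Suc (Suc j) < x" using vlo by blast
    thus "j < x" by simp
  qed
  have vhi': "\<forall>x\<in>tvars hi. j < x"
  proof
    fix x assume "x \<in> tvars hi"
    hence "Suc (Suc j) < x" using vhi by blast
    thus "j < x" by simp
  qed
  define R where "R c = (l < a \<and> a < h \<and> (if l < c \<and> c < a then innerA (ta j) m1 l c a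
          else if a < c \<and> c < h then innerA (ta j) m2 a c h
          else if c \<le> l then (m1 = 0 \<or> l + 1 < a)
          else if h \<le> c then (m2 = 0 \<or> a + 1 < h) else True))" for c
  have key: "holds w (\<sigma>(Suc j := c)) (pre j True M) = R c" if cr: "c \<in> {1..n}" for c
  proof -
    define \<sigma>c where "\<sigma>c = \<sigma>(Suc j := c)"
    have tc: "teval w \<sigma>c lo = l" "teval w \<sigma>c hi = h" unfolding \<sigma>c_def l_def h_def
      by (rule teval_agree; use vlo vhi in force)+
    define M' where "M' = (if l < a \<and> a < h then (if l < c \<and> c < a then A1 else if a < c \<and> c < h then A2
        else if c \<le> l then N1 else if h \<le> c then N2 else TT) else FF)"
    have cong: "holds w \<tau> M = holds w \<tau> M'" if agr: "\<forall>x. (x = 0 \<or> j < x) \<longrightarrow> \<tau> x = \<sigma>c x" for \<tau>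
    proof -
      have tt: "teval w \<tau> lo = l" "teval w \<tau> hi = h"
        using teval_agree2[OF vlo' agr] teval_agree2[OF vhi' agr] tc by auto
      have tv: "\<tau> (Suc j) = c" "\<tau> (Suc (Suc j)) = a" using agr unfolding \<sigma>c_def a_def by auto
      have e: "holds w \<tau> M = (l < a \<and> a < h \<and> (l < c \<and> c < a \<longrightarrow> holds w \<tau> A1) \<and>
           (a < c \<and> c < h \<longrightarrow> holds w \<tau> A2) \<and> (\<not> l < c \<longrightarrow> holds w \<tau> N1) \<and> (\<not> c < h \<longrightarrow> holds w \<tau> N2))"
        unfolding M_def stepF_def N1_def[symmetric] N2_def[symmetric] by (simp add: inside_def imp_def tt tv) blast
      show ?thesis unfolding e M'_def by (auto simp: TT_def FF_def)
    qed
    have "holds w \<sigma>c (pre j True M) = holds w \<sigma>c (pre j True M')"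
      by (rule pre_cong) (use cong in blast)
    also have "\<dots> = R c"
    proof (cases "l < a \<and> a < h")
      case False
      have "\<not> R c" unfolding R_def using False by auto
      moreover have "M' = FF" unfolding M'_def using False by auto
      ultimately show ?thesis using pre_FF[OF n1] by simp
    next
      case T: True
      have a_n: "a \<le> length w" using T rh h_def by auto
      have sc: "\<sigma>c (Suc j) = c" "\<sigma>c (Suc (Suc j)) = a" unfolding \<sigma>c_def a_def by simp_all
      have l1: "1 \<le> l" "h \<le> length w" using rl rh l_def h_def by auto
      show ?thesis
      proof (cases "l < c \<and> c < a")
        case True
        have "holds w \<sigma>c (pre j True A1) = innerA (ta j) m1 (teval w \<sigma>c lo) (\<sigma>c (Suc j)) (teval w \<sigma>c (Var (Suc (Suc j))))"
          unfolding A1_def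
        proof (rule LA[OF mb(1)])
          show "\<forall>x\<in>tvars lo \<union> tvars (Var (Suc (Suc j))). Suc j < x" using vlo by auto
        qed (use tc sc True l1 a_n in simp_all)
        thus ?thesis unfolding M'_def R_def using T True tc by (simp add: \<sigma>c_def a_def)
      next
        case F1: False
        show ?thesis
        proof (cases "a < c \<and> c < h")
          case True
          have "holds w \<sigma>c (pre j True A2) = innerA (ta j) m2 (teval w \<sigma>c (Var (Suc (Suc j)))) (\<sigma>c (Suc j)) (teval w \<sigma>c hi)"
            unfolding A2_def
          proof (rule LA[OF mb(2)])
            show "\<forall>x\<in>tvars (Var (Suc (Suc j))) \<union> tvars hi. Suc j < x" using vhi by auto
          qed (use tc sc True l1 a_n T in simp_all)
          thus ?thesis unfolding M'_def R_def using T True F1 tc by (simp add: \<sigma>c_def a_def)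
        next
          case F2: False
          show ?thesis
          proof (cases "c \<le> l")
            case True
            have "holds w \<sigma>c (pre j True N1) = (m1 = 0 \<or> l + 1 < a)"
            proof (cases "m1 = 0")
              case True thus ?thesis unfolding N1_def using pre_TT[OF n1] by simp
            next
              case False
              then obtain i where ji: "j = Suc i" using mb(1) tb_pos[of "Suc j"] by (cases j) auto
              have "holds w \<sigma>c (pre j True N1) = (teval w \<sigma>c lo + 1 < teval w \<sigma>c (Var (Suc (Suc j))) \<and> teval w \<sigma>c lo + 1 \<le> length w)"
              proof -
                have vv: "\<forall>x\<in>tvars lo \<union> tvars (Var (Suc (Suc j))). Suc i < x"
                proof
                  fix x assume "x \<in> tvars lo \<union> tvars (Var (Suc (Suc j)))"
                  moreover have "x \<in> tvars lo \<Longrightarrow> j < x" using vlo' by blast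
                  ultimately show "Suc i < x" using ji by auto
                qed
                show ?thesis unfolding N1_def using False ji pre_inside[OF n1 vv, of \<sigma>c] by simp
              qed
              thus ?thesis using tc False a_n sc by auto
            qed
            thus ?thesis unfolding M'_def R_def using T True F1 F2 by simp
          next
            case F3: False
            show ?thesis
            proof (cases "h \<le> c")
              case True
              have "holds w \<sigma>c (pre j True N2) = (m2 = 0 \<or> a + 1 < h)"
              proof (cases "m2 = 0")
                case True thus ?thesis unfolding N2_def using pre_TT[OF n1] by simp
              next
                case False
                then obtain i where ji: "j = Suc i" using mb(2) tb_pos[of "Suc j"] by (cases j) auto
                have "holds w \<sigma>c (pre j True N2) = (teval w \<sigma>c (Var (Suc (Suc j))) + 1 < teval w \<sigma>c hi \<and> teval w \<sigma>c (Var (Suc (Suc j))) + 1 \<le> length w)"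
                proof -
                  have vv: "\<forall>x\<in>tvars (Var (Suc (Suc j))) \<union> tvars hi. Suc i < x"
                  proof
                    fix x assume "x \<in> tvars (Var (Suc (Suc j))) \<union> tvars hi"
                    moreover have "x \<in> tvars hi \<Longrightarrow> Suc (Suc j) < x" using vhi by blast
                    ultimately show "Suc i < x" using ji by auto
                  qed
                  show ?thesis unfolding N2_def using False ji pre_inside[OF n1 vv, of \<sigma>c] by simp
                qed
                thus ?thesis using tc False l1 sc by auto
              qed
              thus ?thesis unfolding M'_def R_def using T True F1 F2 F3 by simp
            next
              case False
              thus ?thesis unfolding M'_def R_def using T F1 F2 F3 pre_TT[OF n1] by simp
            qed
          qed
        qed
      qed
    qed
    finally show ?thesis unfolding \<sigma>c_def .
  qed
  have unf: "holds w \<sigma> (pre (Suc j) False M) = (\<forall>c\<in>{1..n}. R c)"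
    using key n_def by simp
  have s1: "((\<forall>c. l < c \<and> c < a \<longrightarrow> innerA (ta j) m1 l c a) \<and> (m1 = 0 \<or> l + 1 < a)) \<longleftrightarrow> l + m1 < a"
    if "l < a" using side[OF mb(1) that] .
  have s2: "((\<forall>c. a < c \<and> c < h \<longrightarrow> innerA (ta j) m2 a c h) \<and> (m2 = 0 \<or> a + 1 < h)) \<longleftrightarrow> a + m2 < h"
    if "a < h" using side[OF mb(2) that] .
  have l1: "1 \<le> l" and hn: "h \<le> n" using rl rh l_def h_def n_def by auto
  have res: "(\<forall>c\<in>{1..n}. R c) = (l + m1 < a \<and> a + m2 < h)"
  proof
    assume all: "\<forall>c\<in>{1..n}. R c"
    have "l \<le> n" using rl2 l_def n_def by simp
    hence Rl: "R l" using all l1 hn by auto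
    hence lah: "l < a" "a < h" unfolding R_def by auto
    have Rh: "R h" using all lah l1 hn by auto
    have A: "\<forall>c. l < c \<and> c < a \<longrightarrow> innerA (ta j) m1 l c a"
    proof (intro allI impI)
      fix c assume "l < c \<and> c < a"
      hence "R c" using all l1 hn lah by auto
      thus "innerA (ta j) m1 l c a" using \<open>l < c \<and> c < a\<close> unfolding R_def by auto
    qed
    have B: "\<forall>c. a < c \<and> c < h \<longrightarrow> innerA (ta j) m2 a c h"
    proof (intro allI impI)
      fix c assume "a < c \<and> c < h"
      hence "R c" using all l1 hn lah by auto
      thus "innerA (ta j) m2 a c h" using \<open>a < c \<and> c < h\<close> unfolding R_def by auto
    qed
    have "m1 = 0 \<or> l + 1 < a" using Rl lah unfolding R_def by auto
    moreover have "m2 = 0 \<or> a + 1 < h" using Rh lah unfolding R_def by auto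
    ultimately show "l + m1 < a \<and> a + m2 < h" using s1[OF lah(1)] s2[OF lah(2)] A B by blast
  next
    assume h1: "l + m1 < a \<and> a + m2 < h"
    hence lah: "l < a" "a < h" by auto
    have A: "\<forall>c. l < c \<and> c < a \<longrightarrow> innerA (ta j) m1 l c a" "m1 = 0 \<or> l + 1 < a"
      using s1[OF lah(1)] h1 by blast+
    have B: "\<forall>c. a < c \<and> c < h \<longrightarrow> innerA (ta j) m2 a c h" "m2 = 0 \<or> a + 1 < h"
      using s2[OF lah(2)] h1 by blast+
    show "\<forall>c\<in>{1..n}. R c" unfolding R_def using lah A B by auto
  qed
  have "holds w \<sigma> (pre (Suc j) False M) = (l + m1 < a \<and> a + m2 < h)" using unf res by (rule trans)
  thus ?thesis unfolding M_def A1_def A2_def l_def h_def a_def .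
qed

lemma ball_shift: "\<forall>x\<in>A. k < x \<Longrightarrow> j \<le> k \<Longrightarrow> \<forall>x\<in>A. j < (x::nat)"
proof
  fix x assume "\<forall>x\<in>A. k < x" "j \<le> k" "x \<in> A"
  hence "k < x" by blast
  thus "j < x" using \<open>j \<le> k\<close> by linarith
qed

lemma sem:
  assumes n1: "length w \<ge> 1"
  shows "(\<forall>m \<sigma> lo hi. m \<le> ta k \<longrightarrow> (\<forall>x\<in>tvars lo \<union> tvars hi. k < x) \<longrightarrow>
            1 \<le> teval w \<sigma> lo \<longrightarrow> teval w \<sigma> lo \<le> length w \<longrightarrow> teval w \<sigma> hi \<le> length w \<longrightarrow>
            holds w \<sigma> (pre k True (ME k m lo hi)) = (m = 0 \<or> teval w \<sigma> lo + m < teval w \<sigma> hi)) \<and>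
         (\<forall>m \<sigma> lo hi. m \<le> tb k \<longrightarrow> (\<forall>x\<in>tvars lo \<union> tvars hi. k < x) \<longrightarrow>
            1 \<le> teval w \<sigma> lo \<longrightarrow> teval w \<sigma> hi \<le> length w \<longrightarrow>
            teval w \<sigma> lo < \<sigma> k \<longrightarrow> \<sigma> k < teval w \<sigma> hi \<longrightarrow>
            holds w \<sigma> (pre (k - 1) True (MAin k m lo hi)) = innerA (ta (k - 1)) m (teval w \<sigma> lo) (\<sigma> k) (teval w \<sigma> hi))"
proof (induction k rule: less_induct)
  case (less k)
  show ?case
  proof (cases "k \<le> 1")
    case True
    hence k01: "k = 0 \<or> k = 1" by auto
    have LA: "holds w \<sigma> (pre (k - 1) True (MAin k m lo hi)) = innerA (ta (k - 1)) m (teval w \<sigma> lo) (\<sigma> k) (teval w \<sigma> hi)"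
      if "m \<le> tb k" for m \<sigma> lo hi
    proof -
      have "tb k = 0" using k01 by auto
      hence "m = 0" using that by auto
      moreover have "MAin k 0 lo hi = TT" using k01 by auto
      ultimately show ?thesis using pre_TT[OF n1] by (simp add: innerA_def)
    qed
    have LE: "holds w \<sigma> (pre k True (ME k m lo hi)) = (m = 0 \<or> teval w \<sigma> lo + m < teval w \<sigma> hi)"
      if "m \<le> ta k" "\<forall>x\<in>tvars lo \<union> tvars hi. k < x" "teval w \<sigma> hi \<le> length w" for m \<sigma> lo hi
    proof (cases "m = 0")
      case True
      moreover have "ME k 0 lo hi = TT" using k01 by auto
      ultimately show ?thesis using pre_TT[OF n1] by simp
    next
      case False
      hence k1: "k = 1" "m = 1" using k01 that(1) by auto
      have vv: "\<forall>x\<in>tvars lo \<union> tvars hi. Suc 0 < x" using that(2) k1 by simp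
      have "ME k m lo hi = inside (Var (Suc 0)) lo hi" using k1 by simp
      thus ?thesis using pre_inside[OF n1 vv, of \<sigma>] k1 that(3) by auto
    qed
    show ?thesis using LA LE by blast
  next
    case False
    then obtain j where k: "k = Suc (Suc j)" by (cases k; cases "k - 1") auto
    have IH: "(\<forall>m \<sigma> lo hi. m \<le> ta (Suc j) \<longrightarrow> (\<forall>x\<in>tvars lo \<union> tvars hi. Suc j < x) \<longrightarrow>
            1 \<le> teval w \<sigma> lo \<longrightarrow> teval w \<sigma> lo \<le> length w \<longrightarrow> teval w \<sigma> hi \<le> length w \<longrightarrow>
            holds w \<sigma> (pre (Suc j) True (ME (Suc j) m lo hi)) = (m = 0 \<or> teval w \<sigma> lo + m < teval w \<sigma> hi)) \<and>
         (\<forall>m \<sigma> lo hi. m \<le> tb (Suc j) \<longrightarrow> (\<forall>x\<in>tvars lo \<union> tvars hi. Suc j < x) \<longrightarrow>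
            1 \<le> teval w \<sigma> lo \<longrightarrow> teval w \<sigma> hi \<le> length w \<longrightarrow>
            teval w \<sigma> lo < \<sigma> (Suc j) \<longrightarrow> \<sigma> (Suc j) < teval w \<sigma> hi \<longrightarrow>
            holds w \<sigma> (pre j True (MAin (Suc j) m lo hi)) = innerA (ta j) m (teval w \<sigma> lo) (\<sigma> (Suc j)) (teval w \<sigma> hi))"
      using less.IH[of "Suc j"] k by simp
    have IHE: "\<And>m \<sigma> lo hi. m \<le> ta (Suc j) \<Longrightarrow> \<forall>x\<in>tvars lo \<union> tvars hi. Suc j < x \<Longrightarrow>
            1 \<le> teval w \<sigma> lo \<Longrightarrow> teval w \<sigma> lo \<le> length w \<Longrightarrow> teval w \<sigma> hi \<le> length w \<Longrightarrow>
            holds w \<sigma> (pre (Suc j) True (ME (Suc j) m lo hi)) = (m = 0 \<or> teval w \<sigma> lo + m < teval w \<sigma> hi)"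
      using IH by blast
    have IHA: "\<And>m \<sigma> lo hi. m \<le> tb (Suc j) \<Longrightarrow> \<forall>x\<in>tvars lo \<union> tvars hi. Suc j < x \<Longrightarrow>
            1 \<le> teval w \<sigma> lo \<Longrightarrow> teval w \<sigma> hi \<le> length w \<Longrightarrow>
            teval w \<sigma> lo < \<sigma> (Suc j) \<Longrightarrow> \<sigma> (Suc j) < teval w \<sigma> hi \<Longrightarrow>
            holds w \<sigma> (pre j True (MAin (Suc j) m lo hi)) = innerA (ta j) m (teval w \<sigma> lo) (\<sigma> (Suc j)) (teval w \<sigma> hi)"
      using IH by blast
    have LE: "holds w \<sigma> (pre k True (ME k m lo hi)) = (m = 0 \<or> teval w \<sigma> lo + m < teval w \<sigma> hi)"
      if mb: "m \<le> ta k" and vars: "\<forall>x\<in>tvars lo \<union> tvars hi. k < x" and r1: "1 \<le> teval w \<sigma> lo"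
        and r2: "teval w \<sigma> lo \<le> length w" and r3: "teval w \<sigma> hi \<le> length w" for m \<sigma> lo hi
    proof (cases "m = 0")
      case True
      moreover have "ME k 0 lo hi = TT" using k by simp
      ultimately show ?thesis using pre_TT[OF n1] by simp
    next
      case False
      define m1 where "m1 = min (tb (Suc j)) (m - 1)"
      define m2 where "m2 = m - 1 - m1"
      have b: "m1 \<le> tb (Suc j)" "m2 \<le> tb (Suc j)" using mb k unfolding m1_def m2_def by auto
      have msum: "m1 + m2 + 1 = m" using False unfolding m1_def m2_def by auto
      have e: "ME k m lo hi = stepF j m1 m2 lo hi (MAin (Suc j) m1 lo (Var (Suc (Suc j)))) (MAin (Suc j) m2 (Var (Suc (Suc j))) hi)"
        using False mb k unfolding m1_def m2_def by simp
      have vlo: "\<forall>x\<in>tvars lo. Suc (Suc j) < x" and vhi: "\<forall>x\<in>tvars hi. Suc (Suc j) < x" using vars k by blast+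
      have tt: "teval w (\<sigma>(Suc (Suc j) := a)) lo = teval w \<sigma> lo" "teval w (\<sigma>(Suc (Suc j) := a)) hi = teval w \<sigma> hi" for a
        by (rule teval_agree; use vlo vhi in force)+
      have vars2: "\<forall>x\<in>tvars lo \<union> tvars hi. Suc (Suc j) < x" using vars k by simp
      have st: "holds w (\<sigma>(Suc (Suc j) := a)) (pre (Suc j) False (ME k m lo hi)) = (teval w \<sigma> lo + m1 < a \<and> a + m2 < teval w \<sigma> hi)" for a
      proof -
        have "holds w (\<sigma>(Suc (Suc j) := a)) (pre (Suc j) False (ME k m lo hi)) =
             (teval w (\<sigma>(Suc (Suc j) := a)) lo + m1 < (\<sigma>(Suc (Suc j) := a)) (Suc (Suc j)) \<and>
              (\<sigma>(Suc (Suc j) := a)) (Suc (Suc j)) + m2 < teval w (\<sigma>(Suc (Suc j) := a)) hi)"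
          unfolding e by (rule LStep[OF n1 IHA b vars2]) (simp_all only: tt r1 r2 r3)
        thus ?thesis by (simp only: tt fun_upd_same)
      qed
      have "holds w \<sigma> (pre k True (ME k m lo hi)) = (\<exists>a\<in>{1..length w}. holds w (\<sigma>(Suc (Suc j) := a)) (pre (Suc j) False (ME k m lo hi)))"
        unfolding k by (rule pre_Suc_ex)
      also have "\<dots> = (\<exists>a\<in>{1..length w}. teval w \<sigma> lo + m1 < a \<and> a + m2 < teval w \<sigma> hi)" by (simp only: st)
      also have "\<dots> = (teval w \<sigma> lo + m < teval w \<sigma> hi)"
      proof
        assume "\<exists>a\<in>{1..length w}. teval w \<sigma> lo + m1 < a \<and> a + m2 < teval w \<sigma> hi"
        thus "teval w \<sigma> lo + m < teval w \<sigma> hi" using msum by auto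
      next
        assume h: "teval w \<sigma> lo + m < teval w \<sigma> hi"
        show "\<exists>a\<in>{1..length w}. teval w \<sigma> lo + m1 < a \<and> a + m2 < teval w \<sigma> hi"
          by (rule bexI[of _ "teval w \<sigma> lo + m1 + 1"]) (use h msum r3 in auto)
      qed
      finally show ?thesis using False by simp
    qed
    have LA: "holds w \<sigma> (pre (k - 1) True (MAin k m lo hi)) = innerA (ta (k - 1)) m (teval w \<sigma> lo) (\<sigma> k) (teval w \<sigma> hi)"
      if mb: "m \<le> tb k" and vars: "\<forall>x\<in>tvars lo \<union> tvars hi. k < x" and r1: "1 \<le> teval w \<sigma> lo"
        and r3: "teval w \<sigma> hi \<le> length w" and lc: "teval w \<sigma> lo < \<sigma> k" and ch: "\<sigma> k < teval w \<sigma> hi" for m \<sigma> lo hi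
    proof (cases "m = 0")
      case True
      moreover have "MAin k 0 lo hi = TT" using k by simp
      ultimately show ?thesis using pre_TT[OF n1] by (simp add: innerA_def)
    next
      case False
      define c1 where "c1 = min (ta (Suc j)) (m - 1)"
      define c2 where "c2 = m - c1"
      define l where "l = teval w \<sigma> lo"
      define h where "h = teval w \<sigma> hi"
      define c where "c = \<sigma> k"
      define y where "y = Var (Suc (Suc j))"
      define ME1 where "ME1 = ME (Suc j) c1 lo y"
      define ME2 where "ME2 = ME (Suc j) c2 y hi"
      have b: "c1 \<le> ta (Suc j)" "c2 \<le> ta (Suc j)" "c2 \<ge> 1" using mb k c2_bound False unfolding c1_def c2_def by auto
      have e: "MAin k m lo hi = Disj (if c1 = 0 then TT else Conj (inside (Var (Suc j)) lo y) ME1)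
          (Conj (inside (Var (Suc j)) y hi) ME2)"
        using False mb k unfolding c1_def c2_def ME1_def ME2_def y_def by simp
      have vlo: "\<forall>x\<in>tvars lo. Suc (Suc j) < x" and vhi: "\<forall>x\<in>tvars hi. Suc (Suc j) < x" using vars k by blast+
      have vlo': "\<forall>x\<in>tvars lo. j < x" and vhi': "\<forall>x\<in>tvars hi. j < x" using ball_shift[OF vlo] ball_shift[OF vhi] by auto
      have vlo1: "\<forall>x\<in>tvars lo \<union> tvars y. Suc j < x" using ball_shift[OF vlo] y_def by auto
      have vhi1: "\<forall>x\<in>tvars y \<union> tvars hi. Suc j < x" using ball_shift[OF vhi] y_def by auto
      have ty: "teval w \<sigma> y = c" unfolding y_def c_def k by simp
      have tl: "teval w (\<sigma>(Suc j := d)) lo = l" "teval w (\<sigma>(Suc j := d)) hi = h" "teval w (\<sigma>(Suc j := d)) y = c" for d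
      proof -
        show "teval w (\<sigma>(Suc j := d)) lo = l" "teval w (\<sigma>(Suc j := d)) hi = h"
          unfolding l_def h_def by (rule teval_agree; use vlo vhi in force)+
        show "teval w (\<sigma>(Suc j := d)) y = c" unfolding y_def c_def k by simp
      qed
      have key: "holds w (\<sigma>(Suc j := d)) (pre j False (MAin k m lo hi)) =
          (c1 = 0 \<or> (l < d \<and> d < c \<and> holds w (\<sigma>(Suc j := d)) (pre j False ME1)) \<or>
                    (c < d \<and> d < h \<and> holds w (\<sigma>(Suc j := d)) (pre j False ME2)))" for d
      proof -
        define M' where "M' = (if c1 = 0 then TT else if l < d \<and> d < c then ME1 else if c < d \<and> d < h then ME2 else FF)"
        have cong: "holds w \<tau> (MAin k m lo hi) = holds w \<tau> M'" if agr: "\<forall>x. (x = 0 \<or> j < x) \<longrightarrow> \<tau> x = (\<sigma>(Suc j := d)) x" for \<tau>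
        proof -
          have tt1: "teval w \<tau> lo = l" by (rule trans[OF teval_agree2[OF vlo' agr] tl(1)])
          have tt2: "teval w \<tau> hi = h" by (rule trans[OF teval_agree2[OF vhi' agr] tl(2)])
          have tt3: "teval w \<tau> y = c" using agr unfolding y_def c_def k by auto
          note tt = tt1 tt2 tt3
          have tv: "\<tau> (Suc j) = d" using agr by auto
          show ?thesis unfolding e M'_def using tt tv by (auto simp: inside_def TT_def FF_def)
        qed
        have "holds w (\<sigma>(Suc j := d)) (pre j False (MAin k m lo hi)) = holds w (\<sigma>(Suc j := d)) (pre j False M')"
          by (rule pre_cong) (use cong in blast)
        also have "\<dots> = (c1 = 0 \<or> (l < d \<and> d < c \<and> holds w (\<sigma>(Suc j := d)) (pre j False ME1)) \<or>
                    (c < d \<and> d < h \<and> holds w (\<sigma>(Suc j := d)) (pre j False ME2)))"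
          unfolding M'_def using pre_TT[OF n1] pre_FF[OF n1] by auto
        finally show ?thesis .
      qed
      have r1': "1 \<le> l" "l \<le> length w" "c \<le> length w" "h \<le> length w" "1 \<le> c"
        using r1 r3 lc ch l_def h_def c_def by auto
      have E1: "(\<exists>d\<in>{1..length w}. l < d \<and> d < c \<and> holds w (\<sigma>(Suc j := d)) (pre j False ME1)) = (l + c1 < c)"
        if cc: "c1 \<noteq> 0"
      proof -
        have A0: "holds w \<sigma> (pre (Suc j) True ME1) = (c1 = 0 \<or> teval w \<sigma> lo + c1 < teval w \<sigma> y)"
          unfolding ME1_def by (rule IHE[OF b(1) vlo1]) (use r1' l_def ty in simp_all)
        have A: "holds w \<sigma> (pre (Suc j) True ME1) = (l + c1 < c)"
          using A0 cc l_def ty by (simp only: simp_thms)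
        have B: "holds w \<sigma> (pre (Suc j) True ME1) = (\<exists>d\<in>{1..length w}. holds w (\<sigma>(Suc j := d)) (pre j False ME1))"
          by (rule pre_Suc_ex)
        have C: "l < d \<and> d < c" if X: "holds w (\<sigma>(Suc j := d)) (pre j False ME1)" for d
        proof -
          have "teval w (\<sigma>(Suc j := d)) lo < (\<sigma>(Suc j := d)) (Suc j) \<and> (\<sigma>(Suc j := d)) (Suc j) < teval w (\<sigma>(Suc j := d)) y"
            by (rule ME_inside[OF n1 _ b(1) vlo1]) (use cc X in \<open>simp_all add: ME1_def\<close>)
          thus ?thesis by (simp only: tl fun_upd_same)
        qed
        show ?thesis
        proof
          assume "\<exists>d\<in>{1..length w}. l < d \<and> d < c \<and> holds w (\<sigma>(Suc j := d)) (pre j False ME1)"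
          then obtain d where "d \<in> {1..length w}" "holds w (\<sigma>(Suc j := d)) (pre j False ME1)" by blast
          hence "holds w \<sigma> (pre (Suc j) True ME1)" using B by blast
          thus "l + c1 < c" using A by simp
        next
          assume "l + c1 < c"
          hence "holds w \<sigma> (pre (Suc j) True ME1)" using A by simp
          then obtain d where "d \<in> {1..length w}" "holds w (\<sigma>(Suc j := d)) (pre j False ME1)" using B by blast
          thus "\<exists>d\<in>{1..length w}. l < d \<and> d < c \<and> holds w (\<sigma>(Suc j := d)) (pre j False ME1)"
            using C by blast
        qed
      qed
      have E2: "(\<exists>d\<in>{1..length w}. c < d \<and> d < h \<and> holds w (\<sigma>(Suc j := d)) (pre j False ME2)) = (c + c2 < h)"
        if cc: "c2 \<noteq> 0"
      proof -
        have A0: "holds w \<sigma> (pre (Suc j) True ME2) = (c2 = 0 \<or> teval w \<sigma> y + c2 < teval w \<sigma> hi)"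
          unfolding ME2_def by (rule IHE[OF b(2) vhi1]) (use r1' h_def ty in simp_all)
        have A: "holds w \<sigma> (pre (Suc j) True ME2) = (c + c2 < h)"
          using A0 cc h_def ty by (simp only: simp_thms)
        have B: "holds w \<sigma> (pre (Suc j) True ME2) = (\<exists>d\<in>{1..length w}. holds w (\<sigma>(Suc j := d)) (pre j False ME2))"
          by (rule pre_Suc_ex)
        have C: "c < d \<and> d < h" if X: "holds w (\<sigma>(Suc j := d)) (pre j False ME2)" for d
        proof -
          have "teval w (\<sigma>(Suc j := d)) y < (\<sigma>(Suc j := d)) (Suc j) \<and> (\<sigma>(Suc j := d)) (Suc j) < teval w (\<sigma>(Suc j := d)) hi"
            by (rule ME_inside[OF n1 _ b(2) vhi1]) (use cc X in \<open>simp_all add: ME2_def\<close>)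
          thus ?thesis by (simp only: tl fun_upd_same)
        qed
        show ?thesis
        proof
          assume "\<exists>d\<in>{1..length w}. c < d \<and> d < h \<and> holds w (\<sigma>(Suc j := d)) (pre j False ME2)"
          then obtain d where "d \<in> {1..length w}" "holds w (\<sigma>(Suc j := d)) (pre j False ME2)" by blast
          hence "holds w \<sigma> (pre (Suc j) True ME2)" using B by blast
          thus "c + c2 < h" using A by simp
        next
          assume "c + c2 < h"
          hence "holds w \<sigma> (pre (Suc j) True ME2)" using A by simp
          then obtain d where "d \<in> {1..length w}" "holds w (\<sigma>(Suc j := d)) (pre j False ME2)" using B by blast
          thus "\<exists>d\<in>{1..length w}. c < d \<and> d < h \<and> holds w (\<sigma>(Suc j := d)) (pre j False ME2)"
            using C by blast
        qed
      qed
      have k1: "k - 1 = Suc j" using k by simp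
      have "holds w \<sigma> (pre (k - 1) True (MAin k m lo hi)) = (\<exists>d\<in>{1..length w}. holds w (\<sigma>(Suc j := d)) (pre j False (MAin k m lo hi)))"
        unfolding k1 by (rule pre_Suc_ex)
      also have "\<dots> = (c1 = 0 \<or> l + c1 < c \<or> c + c2 < h)"
      proof (cases "c1 = 0")
        case True thus ?thesis unfolding key using n1 by auto
      next
        case False
        have "(\<exists>d\<in>{1..length w}. holds w (\<sigma>(Suc j := d)) (pre j False (MAin k m lo hi))) =
              ((\<exists>d\<in>{1..length w}. l < d \<and> d < c \<and> holds w (\<sigma>(Suc j := d)) (pre j False ME1)) \<or>
               (\<exists>d\<in>{1..length w}. c < d \<and> d < h \<and> holds w (\<sigma>(Suc j := d)) (pre j False ME2)))"
          unfolding key using False by blast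
        thus ?thesis using E1[OF False] E2 False b(3) by simp
      qed
      also have "\<dots> = innerA (ta (k - 1)) m l c h"
        unfolding innerA_def c1_def c2_def using False k by simp
      finally show ?thesis unfolding l_def h_def c_def .
    qed
    show ?thesis using LE LA by blast
  qed
qed

lemma fv_step:
  assumes b: "m1 \<le> tb (Suc j)" "m2 \<le> tb (Suc j)"
  shows "free_vars (stepF j m1 m2 lo hi (MAin (Suc j) m1 lo (Var (Suc (Suc j)))) (MAin (Suc j) m2 (Var (Suc (Suc j))) hi))
           \<subseteq> {1..Suc (Suc j)} \<union> tvars lo \<union> tvars hi"
proof -
  have ih: "\<And>m lo hi. m \<le> tb (Suc j) \<Longrightarrow> free_vars (MAin (Suc j) m lo hi) \<subseteq> {1..Suc j} \<union> tvars lo \<union> tvars hi"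
    using fv_ME[of "Suc j"] by blast
  have j1: "j \<ge> 1" if "m1 \<noteq> 0 \<or> m2 \<noteq> 0"
  proof -
    have "tb (Suc j) \<ge> 1" using that b by auto
    thus ?thesis using tb_pos[of "Suc j"] by auto
  qed
  have s1: "free_vars (MAin (Suc j) m1 lo (Var (Suc (Suc j)))) \<subseteq> {1..Suc (Suc j)} \<union> tvars lo \<union> tvars hi"
    using ih[OF b(1), of lo "Var (Suc (Suc j))"] by auto
  have s2: "free_vars (MAin (Suc j) m2 (Var (Suc (Suc j))) hi) \<subseteq> {1..Suc (Suc j)} \<union> tvars lo \<union> tvars hi"
    using ih[OF b(2), of "Var (Suc (Suc j))" hi] by auto
  show ?thesis unfolding stepF_def using s1 s2 j1
    by (auto simp: TT_def inside_def imp_def)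
qed

lemma qfree_step: "qfree (stepF j m1 m2 lo hi (MAin (Suc j) m1 lo (Var (Suc (Suc j)))) (MAin (Suc j) m2 (Var (Suc (Suc j))) hi))"
  using qfree_ME by (simp add: stepF_def TT_def inside_def imp_def)

lemma pre_alt: "qfree M \<Longrightarrow> 1 \<le> k \<Longrightarrow> (Q \<longleftrightarrow> even k) \<Longrightarrow> (if Q then ends_ex (pre k Q M) else ends_all (pre k Q M))"
proof (induction k arbitrary: Q)
  case 0 thus ?case by simp
next
  case (Suc k)
  show ?case
  proof (cases "k = 0")
    case True thus ?thesis using Suc.prems by simp
  next
    case False
    have "if \<not> Q then ends_ex (pre k (\<not> Q) M) else ends_all (pre k (\<not> Q) M)"
      using Suc.IH[of "\<not> Q"] Suc.prems False by auto
    thus ?thesis by (cases Q) auto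
  qed
qed

lemma LA_of:
  assumes n1: "length w \<ge> 1"
  shows "\<And>m \<sigma> lo hi. m \<le> tb (Suc j) \<Longrightarrow> \<forall>x\<in>tvars lo \<union> tvars hi. Suc j < x \<Longrightarrow>
              1 \<le> teval w \<sigma> lo \<Longrightarrow> teval w \<sigma> hi \<le> length w \<Longrightarrow>
              teval w \<sigma> lo < \<sigma> (Suc j) \<Longrightarrow> \<sigma> (Suc j) < teval w \<sigma> hi \<Longrightarrow>
              holds w \<sigma> (pre j True (MAin (Suc j) m lo hi)) = innerA (ta j) m (teval w \<sigma> lo) (\<sigma> (Suc j)) (teval w \<sigma> hi)"
proof -
  have "\<forall>m \<sigma> lo hi. m \<le> tb (Suc j) \<longrightarrow> (\<forall>x\<in>tvars lo \<union> tvars hi. Suc j < x) \<longrightarrow>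
            1 \<le> teval w \<sigma> lo \<longrightarrow> teval w \<sigma> hi \<le> length w \<longrightarrow>
            teval w \<sigma> lo < \<sigma> (Suc j) \<longrightarrow> \<sigma> (Suc j) < teval w \<sigma> hi \<longrightarrow>
            holds w \<sigma> (pre (Suc j - 1) True (MAin (Suc j) m lo hi)) = innerA (ta (Suc j - 1)) m (teval w \<sigma> lo) (\<sigma> (Suc j)) (teval w \<sigma> hi)"
    using sem[OF n1, of "Suc j"] by blast
  hence "\<forall>m \<sigma> lo hi. m \<le> tb (Suc j) \<longrightarrow> (\<forall>x\<in>tvars lo \<union> tvars hi. Suc j < x) \<longrightarrow>
            1 \<le> teval w \<sigma> lo \<longrightarrow> teval w \<sigma> hi \<le> length w \<longrightarrow>
            teval w \<sigma> lo < \<sigma> (Suc j) \<longrightarrow> \<sigma> (Suc j) < teval w \<sigma> hi \<longrightarrow>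
            holds w \<sigma> (pre j True (MAin (Suc j) m lo hi)) = innerA (ta j) m (teval w \<sigma> lo) (\<sigma> (Suc j)) (teval w \<sigma> hi)"
    by (simp only: diff_Suc_1)
  thus "\<And>m \<sigma> lo hi. m \<le> tb (Suc j) \<Longrightarrow> \<forall>x\<in>tvars lo \<union> tvars hi. Suc j < x \<Longrightarrow>
              1 \<le> teval w \<sigma> lo \<Longrightarrow> teval w \<sigma> hi \<le> length w \<Longrightarrow>
              teval w \<sigma> lo < \<sigma> (Suc j) \<Longrightarrow> \<sigma> (Suc j) < teval w \<sigma> hi \<Longrightarrow>
              holds w \<sigma> (pre j True (MAin (Suc j) m lo hi)) = innerA (ta j) m (teval w \<sigma> lo) (\<sigma> (Suc j)) (teval w \<sigma> hi)"
    by blast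
qed

definition lit :: "bool \<Rightarrow> fterm \<Rightarrow> form" where
  "lit b t = (if b then S t else Neg (S t))"

lemma top_sem:
  fixes v :: "bool list" and j m1 m2 :: nat and b :: bool
  assumes n1: "length v \<ge> 1" and b: "m1 \<le> tb (Suc j)" "m2 \<le> tb (Suc j)"
  shows "holds v \<sigma> (pre (Suc (Suc j)) True (Conj (lit b (Var (Suc (Suc j))))
            (stepF j m1 m2 Min Max (MAin (Suc j) m1 Min (Var (Suc (Suc j)))) (MAin (Suc j) m2 (Var (Suc (Suc j))) Max))))
        = (\<exists>a\<in>{1..length v}. (if b then v ! (a - 1) else \<not> v ! (a - 1)) \<and> 1 + m1 < a \<and> a + m2 < length v)"
proof -
  define STEP where "STEP = stepF j m1 m2 Min Max (MAin (Suc j) m1 Min (Var (Suc (Suc j)))) (MAin (Suc j) m2 (Var (Suc (Suc j))) Max)"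
  have fvl: "\<forall>x\<in>free_vars (lit b (Var (Suc (Suc j)))). x = 0 \<or> Suc j < x" by (simp add: lit_def)
  have st: "holds v (\<sigma>(Suc (Suc j) := a)) (pre (Suc j) False STEP) = (1 + m1 < a \<and> a + m2 < length v)" for a
  proof -
    have "holds v (\<sigma>(Suc (Suc j) := a)) (pre (Suc j) False STEP) =
          (teval v (\<sigma>(Suc (Suc j) := a)) Min + m1 < (\<sigma>(Suc (Suc j) := a)) (Suc (Suc j)) \<and>
           (\<sigma>(Suc (Suc j) := a)) (Suc (Suc j)) + m2 < teval v (\<sigma>(Suc (Suc j) := a)) Max)"
      unfolding STEP_def by (rule LStep[OF n1 LA_of[OF n1] b]) (use n1 in simp_all)
    thus ?thesis by simp
  qed
  have "holds v \<sigma> (pre (Suc (Suc j)) True (Conj (lit b (Var (Suc (Suc j)))) STEP)) =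
        (\<exists>a\<in>{1..length v}. holds v (\<sigma>(Suc (Suc j) := a)) (pre (Suc j) False (Conj (lit b (Var (Suc (Suc j)))) STEP)))"
    by (rule pre_Suc_ex)
  also have "\<dots> = (\<exists>a\<in>{1..length v}. holds v (\<sigma>(Suc (Suc j) := a)) (lit b (Var (Suc (Suc j)))) \<and>
                       holds v (\<sigma>(Suc (Suc j) := a)) (pre (Suc j) False STEP))"
    by (simp only: pre_conj[OF fvl n1])
  also have "\<dots> = (\<exists>a\<in>{1..length v}. (if b then v ! (a - 1) else \<not> v ! (a - 1)) \<and> 1 + m1 < a \<and> a + m2 < length v)"
    unfolding st by (rule bex_cong) (auto simp: lit_def Let_def)
  finally show ?thesis unfolding STEP_def .
qed

lemma L_bound:
  assumes n1: "n \<ge> (1::nat)"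
  obtains L where "n \<le> 2^L" "real L \<le> log 2 (real n) + 1"
proof -
  have ex: "\<exists>L. n \<le> 2^L" using less_exp[of n] by (meson less_imp_le)
  define L where "L = (LEAST L. n \<le> (2::nat)^L)"
  have L1: "n \<le> 2^L" unfolding L_def using LeastI_ex[OF ex] .
  have "real L \<le> log 2 (real n) + 1"
  proof (cases L)
    case 0 thus ?thesis using n1 by simp
  next
    case (Suc L')
    have "\<not> n \<le> 2^L'" using not_less_Least[of L' "\<lambda>L. n \<le> (2::nat)^L"] Suc unfolding L_def by auto
    hence "2^L' < n" by simp
    hence "real L' < log 2 (real n)" using less_log2_of_power by blast
    thus ?thesis using Suc by simp
  qed
  thus ?thesis using that L1 by blast
qed

lemma upper:
  fixes w w' :: "bool list" and n :: nat
  assumes lw: "length w = n" and lw': "length w' = n" and n1: "n \<ge> 1" and ne: "w \<noteq> w'"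
  shows "\<exists>\<phi>. sentence \<phi> \<and> real (qcount \<phi>) \<le> log 2 (real n) + 5 \<and> alt_prenex_ending_all \<phi> \<and> models w \<phi> \<and> \<not> models w' \<phi>"
proof -
  have "\<exists>i. i < n \<and> w ! i \<noteq> w' ! i"
  proof (rule ccontr)
    assume "\<not> (\<exists>i. i < n \<and> w ! i \<noteq> w' ! i)"
    hence "w = w'" using lw lw' by (intro nth_equalityI) auto
    thus False using ne by simp
  qed
  then obtain i where i: "i < n" "w ! i \<noteq> w' ! i" by blast
  have logpos: "0 \<le> log 2 (real n)" using n1 by simp
  define b where "b = w ! i"
  show ?thesis
  proof (cases "i = 0 \<or> i = n - 1")
    case True
    define t where "t = (if i = 0 then Min else Max)"
    define \<phi> where "\<phi> = All 1 (lit b t)"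
    have tv: "teval v \<sigma> t = Suc i" if "length v = n" for v :: "bool list" and \<sigma>
      using True that i(1) unfolding t_def by auto
    have md: "models v \<phi> = (if b then v ! i else \<not> v ! i)" if "length v = n" for v :: "bool list"
    proof -
      have "models v \<phi> = (\<forall>a\<in>{1..length v}. holds v ((\<lambda>_. 1)(1 := a)) (lit b t))"
        unfolding models_def \<phi>_def by simp
      also have "\<dots> = (if b then v ! i else \<not> v ! i)"
        using tv[OF that] that n1 i(1) by (auto simp: lit_def Let_def)
      finally show ?thesis .
    qed
    have "sentence \<phi>" unfolding sentence_def \<phi>_def t_def lit_def by auto
    moreover have "real (qcount \<phi>) \<le> log 2 (real n) + 5" unfolding \<phi>_def lit_def using logpos by auto
    moreover have "alt_prenex_ending_all \<phi>" unfolding alt_prenex_ending_all_def \<phi>_def lit_def by auto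
    moreover have "models w \<phi>" using md[OF lw] b_def by simp
    moreover have "\<not> models w' \<phi>" using md[OF lw'] b_def i(2) by auto
    ultimately show ?thesis by blast
  next
    case False
    hence i1: "1 \<le> i" "i + 2 \<le> n" using i(1) by auto
    obtain L where L: "n \<le> 2^L" "real L \<le> log 2 (real n) + 1" using L_bound[OF n1] by blast
    define K where "K = (if even L then L + 4 else L + 3)"
    have K: "even K" "L + 3 \<le> K" "K \<le> L + 4" unfolding K_def by auto
    define j where "j = K - 2"
    have Kj: "K = Suc (Suc j)" "j \<ge> 1" using K j_def by auto
    have "tb (Suc j) \<ge> 2^(Suc j - 2)" using tab_lower[of "Suc j"] Kj by auto
    moreover have "(2::nat)^(Suc j - 2) \<ge> 2^L" using K Kj by (intro power_increasing) auto
    ultimately have tbn: "tb (Suc j) \<ge> n" using L by linarith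
    define m1 where "m1 = i - 1"
    define m2 where "m2 = n - i - 2"
    have b12: "m1 \<le> tb (Suc j)" "m2 \<le> tb (Suc j)" using tbn m1_def m2_def i by auto
    define TOP where "TOP = Conj (lit b (Var (Suc (Suc j))))
            (stepF j m1 m2 Min Max (MAin (Suc j) m1 Min (Var (Suc (Suc j)))) (MAin (Suc j) m2 (Var (Suc (Suc j))) Max))"
    define \<phi> where "\<phi> = pre (Suc (Suc j)) True TOP"
    have md: "models v \<phi> = (if b then v ! i else \<not> v ! i)" if "length v = n" for v :: "bool list"
    proof -
      have "models v \<phi> = (\<exists>a\<in>{1..length v}. (if b then v ! (a - 1) else \<not> v ! (a - 1)) \<and> 1 + m1 < a \<and> a + m2 < length v)"
        unfolding models_def \<phi>_def TOP_def by (rule top_sem[OF _ b12]) (use that n1 in simp)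
      also have "\<dots> = (if b then v ! i else \<not> v ! i)"
      proof
        assume "\<exists>a\<in>{1..length v}. (if b then v ! (a - 1) else \<not> v ! (a - 1)) \<and> 1 + m1 < a \<and> a + m2 < length v"
        then obtain a where a: "(if b then v ! (a - 1) else \<not> v ! (a - 1))" "1 + m1 < a" "a + m2 < length v" by blast
        have "a = Suc i" using a(2,3) that i1 m1_def m2_def by auto
        thus "if b then v ! i else \<not> v ! i" using a(1) by (simp split: if_splits)
      next
        assume h: "if b then v ! i else \<not> v ! i"
        show "\<exists>a\<in>{1..length v}. (if b then v ! (a - 1) else \<not> v ! (a - 1)) \<and> 1 + m1 < a \<and> a + m2 < length v"
          by (rule bexI[of _ "Suc i"]) (use h that i1 m1_def m2_def in auto)
      qed
      finally show ?thesis .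
    qed
    have fvT: "free_vars TOP \<subseteq> {1..Suc (Suc j)}"
      using fv_step[OF b12, of Min Max] unfolding TOP_def by (auto simp: lit_def)
    have "sentence \<phi>" unfolding sentence_def \<phi>_def fv_pre using fvT by auto
    moreover have qT: "qfree TOP" unfolding TOP_def using qfree_step by (simp add: lit_def)
    hence "qcount \<phi> = K" unfolding \<phi>_def using qcount_pre qfree_qcount Kj by simp
    hence "real (qcount \<phi>) \<le> log 2 (real n) + 5" using K L by simp
    moreover have "alt_prenex_ending_all \<phi>"
      using pre_alt[OF qT, of "Suc (Suc j)" True] K Kj unfolding alt_prenex_ending_all_def \<phi>_def by auto
    moreover have "models w \<phi>" using md[OF lw] b_def by simp
    moreover have "\<not> models w' \<phi>" using md[OF lw'] b_def i(2) by auto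
    ultimately show ?thesis by blast
  qed
qed

lemma init_good:
  fixes n t :: nat and r :: nat
  assumes t: "t = 2^r" "r \<ge> 1" and nt: "2 * t \<le> n"
  shows "Good (int n) (int t) (int (t+1)) r (PP n {} \<sigma> \<sigma>')"
proof -
  have PP0: "PP n {} \<sigma> \<sigma>' = {(1,1), (int n, int n)}" unfolding PP_def by simp
  have t2: "t \<ge> 2" using t by (cases r) auto
  have T: "(2::int)^r = int t" using t by simp
  have diag: "\<And>a a'. (a,a') \<in> PP n {} \<sigma> \<sigma>' \<Longrightarrow> a' = a" unfolding PP0 by auto
  have "GA (int n) (int t) (int (t+1)) (PP n {} \<sigma> \<sigma>')"
    unfolding GA_def PP0 using t2 nt by auto
  moreover have "GC (2^r) (PP n {} \<sigma> \<sigma>')"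
    unfolding GC_def using diag by (auto simp: close_def)
  moreover have "GD (2^r) (int t) (int (t+1)) (PP n {} \<sigma> \<sigma>')"
  proof -
    have "close (2^r - 1) (a - int t) (a' - int (t+1))" if "(a,a') \<in> PP n {} \<sigma> \<sigma>'" for a a'
    proof -
      have "(a = 1 \<and> a' = 1) \<or> (a = int n \<and> a' = int n)" using that unfolding PP0 by auto
      thus ?thesis unfolding T close_def using t2 nt by auto
    qed
    moreover have "close (2^r + 1) (b - a) (b' - a')" if "(a,a') \<in> PP n {} \<sigma> \<sigma>'" "(b,b') \<in> PP n {} \<sigma> \<sigma>'" for a a' b b'
      using diag[OF that(1)] diag[OF that(2)] by (simp add: close_def)
    ultimately show ?thesis unfolding GD_def by blast
  qed
  ultimately show ?thesis unfolding Good_def by blast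
qed

lemma lower:
  "\<exists>N::nat. \<forall>n\<ge>N. \<exists>w w'. length w = n \<and> length w' = n \<and> w \<noteq> w' \<and>
            (\<forall>\<phi>. sentence \<phi> \<and> models w \<phi> \<and> \<not> models w' \<phi> \<longrightarrow>
                  real (qcount \<phi>) \<ge> of_int \<lfloor>log 2 (real n)\<rfloor>)"
proof (intro exI[of _ 4] allI impI)
  fix n :: nat assume n4: "4 \<le> n"
  have "0 \<le> log 2 (real n)" using n4 by simp
  hence "0 \<le> \<lfloor>log 2 (real n)\<rfloor>" by simp
  then obtain m :: nat where m: "\<lfloor>log 2 (real n)\<rfloor> = int m" by (metis nonneg_int_cases)
  have mp: "2^m \<le> n" "n < 2^(m+1)" using floor_log_nat_eq_powr_iff[of 2 n m] m n4 by auto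
  have m2: "m \<ge> 2"
  proof (rule ccontr)
    assume "\<not> m \<ge> 2"
    hence "(2::nat)^(m+1) \<le> 4" by (cases m) (auto, case_tac nat, auto)
    thus False using mp n4 by auto
  qed
  define r where "r = m - 1"
  define t :: nat where "t = 2^r"
  have r1: "r \<ge> 1" using m2 r_def by auto
  have tm: "2 * t = 2^m" unfolding t_def r_def using m2 by (cases m) auto
  have t2: "t \<ge> 2" using r1 t_def by (cases r) auto
  define w where "w = sstr n t"
  define w' where "w' = sstr n (t+1)"
  have pr: "1 \<le> t" "t \<le> n" "1 \<le> t + 1" "t + 1 \<le> n" using t2 tm mp by auto
  have "w ! (t - 1) \<noteq> w' ! (t - 1)" unfolding w_def w'_def using sstr_nth pr by simp
  hence ne: "w \<noteq> w'" by auto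
  have bound: "real (qcount \<phi>) \<ge> of_int \<lfloor>log 2 (real n)\<rfloor>"
    if "sentence \<phi> \<and> models w \<phi> \<and> \<not> models w' \<phi>" for \<phi>
  proof -
    have fv: "free_vars \<phi> = {}" using that unfolding sentence_def by simp
    have "\<not> qrank \<phi> \<le> r"
    proof
      assume qr: "qrank \<phi> \<le> r"
      have g: "Good (int n) (int t) (int (t+1)) r (PP n (free_vars \<phi>) (\<lambda>_. 1) (\<lambda>_. 1))"
        unfolding fv by (rule init_good[OF t_def r1]) (use tm mp in auto)
      have "holds (sstr n t) (\<lambda>_. 1) \<phi> = holds (sstr n (t+1)) (\<lambda>_. 1) \<phi>"
        using EF[OF pr qr g] .
      thus False using that unfolding models_def w_def w'_def by simp
    qed
    hence "m \<le> qrank \<phi>" using r_def m2 by auto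
    hence "m \<le> qcount \<phi>" using qrank_le[of \<phi>] by simp
    thus ?thesis using m by simp
  qed
  show "\<exists>w w'. length w = n \<and> length w' = n \<and> w \<noteq> w' \<and>
            (\<forall>\<phi>. sentence \<phi> \<and> models w \<phi> \<and> \<not> models w' \<phi> \<longrightarrow>
                  real (qcount \<phi>) \<ge> of_int \<lfloor>log 2 (real n)\<rfloor>)"
    using ne bound unfolding w_def w'_def by (intro exI[of _ "sstr n t"] exI[of _ "sstr n (t+1)"]) auto
qed

theorem mainTheorem7:
  shows "(\<exists>C::real. \<forall>n::nat. n \<ge> 1 \<longrightarrow>
            (\<forall>w w'. length w = n \<and> length w' = n \<and> w \<noteq> w' \<longrightarrow>
               (\<exists>\<phi>. sentence \<phi> \<and> real (qcount \<phi>) \<le> log 2 (real n) + C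
                     \<and> alt_prenex_ending_all \<phi> \<and> models w \<phi> \<and> \<not> models w' \<phi>)))
       \<and> (\<exists>N::nat. \<forall>n\<ge>N. \<exists>w w'. length w = n \<and> length w' = n \<and> w \<noteq> w' \<and>
            (\<forall>\<phi>. sentence \<phi> \<and> models w \<phi> \<and> \<not> models w' \<phi> \<longrightarrow>
                  real (qcount \<phi>) \<ge> of_int \<lfloor>log 2 (real n)\<rfloor>))"
proof
  show "\<exists>C::real. \<forall>n::nat. n \<ge> 1 \<longrightarrow>
            (\<forall>w w'. length w = n \<and> length w' = n \<and> w \<noteq> w' \<longrightarrow>
               (\<exists>\<phi>. sentence \<phi> \<and> real (qcount \<phi>) \<le> log 2 (real n) + C
                     \<and> alt_prenex_ending_all \<phi> \<and> models w \<phi> \<and> \<not> models w' \<phi>))"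
    using upper by (intro exI[of _ 5]) blast
  show "\<exists>N::nat. \<forall>n\<ge>N. \<exists>w w'. length w = n \<and> length w' = n \<and> w \<noteq> w' \<and>
            (\<forall>\<phi>. sentence \<phi> \<and> models w \<phi> \<and> \<not> models w' \<phi> \<longrightarrow>
                  real (qcount \<phi>) \<ge> of_int \<lfloor>log 2 (real n)\<rfloor>)"
    by (rule lower)
qed

end
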